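(* Let $(W,S)$ be a Coxeter system with $S$ finite such that all elements of $Q_W$ are conjugate in $W$ (i.e. $c(W)=1$). Then the central extension $0\to\mathbb{Z}\to\operatorname{Ad}(Q_W)\xrightarrow{\phi}W\to1$ (where $\mathbb{Z}$ is identified with $\ker\phi$ via $1\mapsto e_s^2$, $s\in S$) is the unique nontrivial central extension of $W$ by $\mathbb{Z}$, up to equivalence of extensions.
   Context: A Coxeter system $(W,S)$: $S$ finite, $m:S\times S\to\mathbb{N}\cup\{\infty\}$ with $m(s,s)=1$, $2\le m(s,t)=m(t,s)\le\infty$ for $s\ne t$, $W=\langle s\in S\mid (st)^{m(s,t)}=1\ (m(s,t)<\infty)\rangle$. The Coxeter quandle $Q_W=\bigcup_{w\in W}w^{-1}Sw$ has operation $x\ast y=yxy$; $\operatorname{Ad}(Q_W)=\langle e_x\ (x\in Q_W)\mid e_y^{-1}e_xe_y=e_{x\ast y}\rangle$; $\phi:\operatorname{Ad}(Q_W)\to W$ is $e_x\mapsto x$. When $c(W)=1$, $\ker\phi$ is central and infinite cyclic, generated by $e_s^2$, which is independent of $s\in S$. *)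

theory Defs
  imports "HOL-Algebra.Algebra" "HOL-Library.Extended_Nat"
begin

text \<open>Words in the free group on Xs: letters (x, True) = x, (x, False) = x^-1.\<close>

fun eval_word :: "('g, 'm) monoid_scheme \<Rightarrow> ('x \<Rightarrow> 'g) \<Rightarrow> ('x \<times> bool) list \<Rightarrow> 'g" where
  "eval_word G g [] = \<one>\<^bsub>G\<^esub>"
| "eval_word G g ((x, b) # w) =
     (if b then g x else inv\<^bsub>G\<^esub> (g x)) \<otimes>\<^bsub>G\<^esub> eval_word G g w"

text \<open>The congruence on words generated by free reduction and the relators R,
  i.e. equality in the group F(Xs)/<<R>>.\<close>

inductive pres_eq :: "('x \<times> bool) list set \<Rightarrow> ('x \<times> bool) list \<Rightarrow> ('x \<times> bool) list \<Rightarrow> bool"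
  for R where
  pres_refl: "pres_eq R w w"
| pres_sym: "pres_eq R u v \<Longrightarrow> pres_eq R v u"
| pres_trans: "pres_eq R u v \<Longrightarrow> pres_eq R v w \<Longrightarrow> pres_eq R u w"
| pres_cancel: "pres_eq R (u @ [(x, b), (x, \<not> b)] @ v) (u @ v)"
| pres_rel: "r \<in> R \<Longrightarrow> pres_eq R (u @ r @ v) (u @ v)"

definition presented_by ::
  "('g, 'm) monoid_scheme \<Rightarrow> 'x set \<Rightarrow> ('x \<Rightarrow> 'g) \<Rightarrow> ('x \<times> bool) list set \<Rightarrow> bool" where
  "presented_by G Xs g R \<longleftrightarrow>
     group G \<and> g \<in> Xs \<rightarrow> carrier G \<and> generate G (g ` Xs) = carrier G \<and>
     (\<forall>r \<in> R. fst ` set r \<subseteq> Xs \<and> eval_word G g r = \<one>\<^bsub>G\<^esub>) \<and>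
     (\<forall>w. fst ` set w \<subseteq> Xs \<longrightarrow> eval_word G g w = \<one>\<^bsub>G\<^esub> \<longrightarrow> pres_eq R w [])"

definition coxeter_relators :: "'a set \<Rightarrow> ('a \<Rightarrow> 'a \<Rightarrow> enat) \<Rightarrow> ('a \<times> bool) list set" where
  "coxeter_relators S m =
     {concat (replicate (the_enat (m s t)) [(s, True), (t, True)]) | s t.
        s \<in> S \<and> t \<in> S \<and> m s t \<noteq> \<infinity>}"

definition coxeter_system :: "'a monoid \<Rightarrow> 'a set \<Rightarrow> ('a \<Rightarrow> 'a \<Rightarrow> enat) \<Rightarrow> bool" where
  "coxeter_system W S m \<longleftrightarrow>
     S \<subseteq> carrier W \<and>
     (\<forall>s \<in> S. m s s = 1) \<and>
     (\<forall>s \<in> S. \<forall>t \<in> S. s \<noteq> t \<longrightarrow> m s t = m t s \<and> 2 \<le> m s t) \<and>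
     presented_by W S id (coxeter_relators S m)"

definition coxeter_quandle :: "'a monoid \<Rightarrow> 'a set \<Rightarrow> 'a set" where
  "coxeter_quandle W S = {inv\<^bsub>W\<^esub> w \<otimes>\<^bsub>W\<^esub> s \<otimes>\<^bsub>W\<^esub> w | w s. w \<in> carrier W \<and> s \<in> S}"

definition quandle_op :: "'a monoid \<Rightarrow> 'a \<Rightarrow> 'a \<Rightarrow> 'a" where
  "quandle_op W x y = y \<otimes>\<^bsub>W\<^esub> x \<otimes>\<^bsub>W\<^esub> y"

definition adjoint_relators :: "'a monoid \<Rightarrow> 'a set \<Rightarrow> ('a \<times> bool) list set" where
  "adjoint_relators W Q =
     {[(y, False), (x, True), (y, True), (quandle_op W x y, False)] | x y. x \<in> Q \<and> y \<in> Q}"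

definition adjoint_group :: "'a monoid \<Rightarrow> 'a set \<Rightarrow> 'b monoid \<Rightarrow> ('a \<Rightarrow> 'b) \<Rightarrow> bool" where
  "adjoint_group W S A e \<longleftrightarrow>
     presented_by A (coxeter_quandle W S) e (adjoint_relators W (coxeter_quandle W S))"

text \<open>c(W) = 1: Q_W is nonempty and all its elements are conjugate in W.\<close>

definition one_conj_class :: "'a monoid \<Rightarrow> 'a set \<Rightarrow> bool" where
  "one_conj_class W S \<longleftrightarrow> coxeter_quandle W S \<noteq> {} \<and>
     (\<forall>x \<in> coxeter_quandle W S. \<forall>y \<in> coxeter_quandle W S.
        \<exists>w \<in> carrier W. y = inv\<^bsub>W\<^esub> w \<otimes>\<^bsub>W\<^esub> x \<otimes>\<^bsub>W\<^esub> w)"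

definition central_extension ::
  "('n, 'x) monoid_scheme \<Rightarrow> ('g, 'y) monoid_scheme \<Rightarrow> ('e, 'z) monoid_scheme
     \<Rightarrow> ('n \<Rightarrow> 'e) \<Rightarrow> ('e \<Rightarrow> 'g) \<Rightarrow> bool" where
  "central_extension N G E i p \<longleftrightarrow>
     group N \<and> group G \<and> group E \<and>
     i \<in> hom N E \<and> inj_on i (carrier N) \<and>
     p \<in> hom E G \<and> p ` carrier E = carrier G \<and>
     i ` carrier N = kernel E G p \<and>
     (\<forall>z \<in> i ` carrier N. \<forall>x \<in> carrier E. z \<otimes>\<^bsub>E\<^esub> x = x \<otimes>\<^bsub>E\<^esub> z)"

definition ext_equiv ::
  "('n, 'x) monoid_scheme \<Rightarrow> ('g, 'y) monoid_scheme
     \<Rightarrow> ('e, 'z) monoid_scheme \<Rightarrow> ('n \<Rightarrow> 'e) \<Rightarrow> ('e \<Rightarrow> 'g)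
     \<Rightarrow> ('f, 'w) monoid_scheme \<Rightarrow> ('n \<Rightarrow> 'f) \<Rightarrow> ('f \<Rightarrow> 'g) \<Rightarrow> bool" where
  "ext_equiv N G E i p E' i' p' \<longleftrightarrow>
     (\<exists>\<theta> \<in> iso E E'. (\<forall>n \<in> carrier N. \<theta> (i n) = i' n) \<and>
                      (\<forall>x \<in> carrier E. p' (\<theta> x) = p x))"

definition nontrivial_extension ::
  "('n, 'x) monoid_scheme \<Rightarrow> ('g, 'y) monoid_scheme \<Rightarrow> ('e, 'z) monoid_scheme
     \<Rightarrow> ('n \<Rightarrow> 'e) \<Rightarrow> ('e \<Rightarrow> 'g) \<Rightarrow> bool" where
  "nontrivial_extension N G E i p \<longleftrightarrow>
     \<not> ext_equiv N G E i p (N \<times>\<times> G) (\<lambda>n. (n, \<one>\<^bsub>G\<^esub>)) snd"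

end

theory Submission
  imports Defs
begin

definition invw :: "('x \<times> bool) list \<Rightarrow> ('x \<times> bool) list" where
  "invw w = rev (map (\<lambda>(x,b). (x, \<not> b)) w)"

lemma fst_set_invw[simp]: "fst ` set (invw w) = fst ` set w"
  by (force simp: invw_def)

lemma mem_invw[simp]: "((a,b) \<in> set (invw w)) = ((a, \<not> b) \<in> set w)"
  by (force simp: invw_def)

lemma invw_Cons[simp]: "invw ((x,b) # w) = invw w @ [(x, \<not> b)]"
  by (simp add: invw_def)

lemma invw_Nil[simp]: "invw [] = []" by (simp add: invw_def)

context group
begin

lemma cancel_left1: "x \<in> carrier G \<Longrightarrow> y \<in> carrier G \<Longrightarrow> x \<otimes> (inv x \<otimes> y) = y"
  by (simp add: m_assoc[symmetric])
lemma cancel_left2: "x \<in> carrier G \<Longrightarrow> y \<in> carrier G \<Longrightarrow> inv x \<otimes> (x \<otimes> y) = y"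
  by (simp add: m_assoc[symmetric])

lemma eval_closed:
  "(\<And>x. x \<in> fst ` set w \<Longrightarrow> g x \<in> carrier G) \<Longrightarrow> eval_word G g w \<in> carrier G"
  by (induction w) auto

lemma eval_append:
  "(\<And>x. x \<in> fst ` set (u @ v) \<Longrightarrow> g x \<in> carrier G) \<Longrightarrow>
    eval_word G g (u @ v) = eval_word G g u \<otimes> eval_word G g v"
proof (induction u)
  case Nil
  then show ?case using eval_closed[of v g] by simp
next
  case (Cons a u)
  obtain x b where a: "a = (x,b)" by force
  have gx: "g x \<in> carrier G" using Cons.prems a by auto
  have c1: "eval_word G g u \<in> carrier G" by (rule eval_closed) (use Cons.prems in auto)
  have c2: "eval_word G g v \<in> carrier G" by (rule eval_closed) (use Cons.prems in auto)
  show ?case using Cons gx c1 c2 a by (auto simp: m_assoc)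
qed

lemma eval_invw:
  "(\<And>x. x \<in> fst ` set w \<Longrightarrow> g x \<in> carrier G) \<Longrightarrow>
    eval_word G g (invw w) = inv (eval_word G g w)"
proof (induction w)
  case Nil
  then show ?case by simp
next
  case (Cons a w)
  obtain x b where a: "a = (x,b)" by force
  have gx: "g x \<in> carrier G" using Cons.prems a by auto
  have c1: "eval_word G g w \<in> carrier G" by (rule eval_closed) (use Cons.prems in auto)
  have "eval_word G g (invw w @ [(x, \<not> b)]) = eval_word G g (invw w) \<otimes> eval_word G g [(x, \<not> b)]"
    by (rule eval_append) (use Cons.prems a in auto)
  then have "eval_word G g (invw (a # w)) = eval_word G g (invw w) \<otimes> eval_word G g [(x, \<not> b)]"
    using a by simp
  also have "\<dots> = inv (eval_word G g w) \<otimes> (if b then inv (g x) else g x)"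
    using Cons gx by auto
  also have "\<dots> = inv ((if b then g x else inv (g x)) \<otimes> eval_word G g w)"
    using gx c1 by (auto simp: inv_mult_group)
  finally show ?case using a by simp
qed

lemma generate_words:
  assumes "x \<in> generate G (g ` Xs)" "g \<in> Xs \<rightarrow> carrier G"
  shows "\<exists>w. fst ` set w \<subseteq> Xs \<and> x = eval_word G g w"
  using assms(1)
proof induction
  case one
  then show ?case by (intro exI[of _ "[]"]) auto
next
  case (incl h)
  then obtain y where "y \<in> Xs" "h = g y" by auto
  moreover have "g y \<in> carrier G" using assms(2) \<open>y \<in> Xs\<close> by auto
  ultimately show ?case by (intro exI[of _ "[(y,True)]"]) auto
next
  case (inv h)
  then obtain y where "y \<in> Xs" "h = g y" by auto
  moreover have "g y \<in> carrier G" using assms(2) \<open>y \<in> Xs\<close> by auto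
  ultimately show ?case by (intro exI[of _ "[(y,False)]"]) auto
next
  case (eng h1 h2)
  then obtain w1 w2 where "fst ` set w1 \<subseteq> Xs" "h1 = eval_word G g w1"
     "fst ` set w2 \<subseteq> Xs" "h2 = eval_word G g w2" by auto
  moreover have "eval_word G g (w1 @ w2) = eval_word G g w1 \<otimes> eval_word G g w2"
    by (rule eval_append) (use assms(2) calculation in auto)
  ultimately show ?case by (intro exI[of _ "w1 @ w2"]) auto
qed

end

lemma hom_eval:
  assumes "group G" "group H" "h \<in> hom G H" "\<And>x. x \<in> fst ` set w \<Longrightarrow> g x \<in> carrier G"
  shows "h (eval_word G g w) = eval_word H (h \<circ> g) w"
  using assms(4)
proof (induction w)
  case Nil
  then show ?case using assms by (simp add: hom_one)
next
  case (Cons a w)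
  obtain x b where a: "a = (x,b)" by force
  interpret gh: group_hom G H h using assms by (simp add: group_hom.intro group_hom_axioms.intro)
  have gx: "g x \<in> carrier G" using Cons.prems a by auto
  have c1: "eval_word G g w \<in> carrier G" by (rule group.eval_closed[OF assms(1)]) (use Cons.prems in auto)
  show ?case using Cons gx c1 a by (cases b) (simp_all add: gh.hom_inv)
qed

lemma pres_eq_eval:
  assumes "pres_eq R u v" "group H" "\<And>x. f x \<in> carrier H" "\<And>r. r \<in> R \<Longrightarrow> eval_word H f r = \<one>\<^bsub>H\<^esub>"
  shows "eval_word H f u = eval_word H f v"
  using assms(1)
proof induction
  case (pres_cancel u x b v)
  interpret H: group H by fact
  have c: "\<And>w. eval_word H f w \<in> carrier H" by (rule H.eval_closed) (use assms(3) in auto)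
  show ?case using assms(3)[of x] c
    using assms(3)[of x] by (cases b) (simp_all add: H.eval_append assms(3) H.cancel_left1 H.cancel_left2)
next
  case (pres_rel r u v)
  interpret H: group H by fact
  have c: "\<And>w. eval_word H f w \<in> carrier H" by (rule H.eval_closed) (use assms(3) in auto)
  show ?case using assms(4)[OF pres_rel] c
    by (auto simp: H.eval_append assms(3))
qed auto

lemma von_dyck:
  assumes pres: "presented_by G Xs g R" and H: "group H" and f: "f \<in> Xs \<rightarrow> carrier H"
    and rel: "\<And>r. r \<in> R \<Longrightarrow> eval_word H f r = \<one>\<^bsub>H\<^esub>"
  shows "\<exists>h \<in> hom G H. \<forall>x\<in>Xs. h (g x) = f x"
proof -
  interpret G: group G using pres by (simp add: presented_by_def)
  interpret H: group H by fact
  have g: "g \<in> Xs \<rightarrow> carrier G" and gen: "generate G (g ` Xs) = carrier G"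
    and Rs: "\<And>r. r \<in> R \<Longrightarrow> fst ` set r \<subseteq> Xs"
    and wp: "\<And>w. fst ` set w \<subseteq> Xs \<Longrightarrow> eval_word G g w = \<one>\<^bsub>G\<^esub> \<Longrightarrow> pres_eq R w []"
    using pres by (auto simp: presented_by_def)
  define f' where "f' x = (if x \<in> Xs then f x else \<one>\<^bsub>H\<^esub>)" for x
  have f'c: "\<And>x. f' x \<in> carrier H" using f by (auto simp: f'_def)
  have ev': "eval_word H f' w = eval_word H f w" if "fst ` set w \<subseteq> Xs" for w
    using that by (induction w) (auto simp: f'_def)
  have rel': "\<And>r. r \<in> R \<Longrightarrow> eval_word H f' r = \<one>\<^bsub>H\<^esub>" using rel Rs ev' by auto
  have gc: "\<And>w. fst ` set w \<subseteq> Xs \<Longrightarrow> (\<And>x. x \<in> fst ` set w \<Longrightarrow> g x \<in> carrier G)"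
    using g by auto
  have wd: "eval_word H f' w1 = eval_word H f' w2"
    if w: "fst ` set w1 \<subseteq> Xs" "fst ` set w2 \<subseteq> Xs" "eval_word G g w1 = eval_word G g w2" for w1 w2
  proof -
    have gc1: "\<And>x. x \<in> fst ` set w1 \<Longrightarrow> g x \<in> carrier G" using w(1) g by auto
    have gc2: "\<And>x. x \<in> fst ` set w2 \<Longrightarrow> g x \<in> carrier G" using w(2) g by auto
    have gc12: "\<And>x. x \<in> fst ` set (w1 @ invw w2) \<Longrightarrow> g x \<in> carrier G" using gc1 gc2 unfolding set_append image_Un fst_set_invw by blast
    have c1: "eval_word G g w1 \<in> carrier G" by (rule G.eval_closed[OF gc1])
    have "eval_word G g (w1 @ invw w2) = eval_word G g w1 \<otimes>\<^bsub>G\<^esub> eval_word G g (invw w2)"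
      by (rule G.eval_append[OF gc12])
    also have "\<dots> = eval_word G g w1 \<otimes>\<^bsub>G\<^esub> inv\<^bsub>G\<^esub> (eval_word G g w1)"
      using G.eval_invw[of w2 g, OF gc2] w(3) by simp
    also have "\<dots> = \<one>\<^bsub>G\<^esub>" using c1 by simp
    finally have "eval_word G g (w1 @ invw w2) = \<one>\<^bsub>G\<^esub>" .
    moreover have "fst ` set (w1 @ invw w2) \<subseteq> Xs" using w(1,2) unfolding set_append image_Un fst_set_invw by blast
    ultimately have "pres_eq R (w1 @ invw w2) []" using wp by blast
    then have "eval_word H f' (w1 @ invw w2) = \<one>\<^bsub>H\<^esub>"
      using pres_eq_eval[of R "w1 @ invw w2" "[]" H f', OF _ H f'c rel'] by simp
    then have "eval_word H f' w1 \<otimes>\<^bsub>H\<^esub> inv\<^bsub>H\<^esub> eval_word H f' w2 = \<one>\<^bsub>H\<^esub>"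
      using f'c by (simp add: H.eval_append H.eval_invw)
    moreover have "eval_word H f' w1 \<in> carrier H" "eval_word H f' w2 \<in> carrier H"
      using H.eval_closed[of w1 f'] H.eval_closed[of w2 f'] f'c by auto
    ultimately show ?thesis by (simp add: H.inv_solve_right')
  qed
  define W where "W a = (SOME w. fst ` set w \<subseteq> Xs \<and> a = eval_word G g w)" for a
  have W: "fst ` set (W a) \<subseteq> Xs \<and> a = eval_word G g (W a)" if "a \<in> carrier G" for a
  proof -
    have "\<exists>w. fst ` set w \<subseteq> Xs \<and> a = eval_word G g w" using G.generate_words[of a g Xs] that gen g by simp
    then show ?thesis unfolding W_def by (rule someI_ex)
  qed
  define h where "h a = eval_word H f' (W a)" for a
  have h_eval: "h (eval_word G g w) = eval_word H f' w" if "fst ` set w \<subseteq> Xs" for w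
  proof -
    have "eval_word G g w \<in> carrier G" using G.eval_closed[of w g] gc[OF that] by blast
    note Wa = W[OF this]
    have "eval_word H f' (W (eval_word G g w)) = eval_word H f' w"
      by (rule wd) (use Wa that in auto)
    then show ?thesis unfolding h_def .
  qed
  have "h \<in> hom G H"
  proof (rule homI)
    fix a assume "a \<in> carrier G"
    show "h a \<in> carrier H" unfolding h_def using H.eval_closed[of "W a" f'] f'c by auto
  next
    fix a b assume ab: "a \<in> carrier G" "b \<in> carrier G"
    have s: "fst ` set (W a @ W b) \<subseteq> Xs" using W[OF ab(1)] W[OF ab(2)] by auto
    have "eval_word G g (W a @ W b) = eval_word G g (W a) \<otimes>\<^bsub>G\<^esub> eval_word G g (W b)"
      by (rule G.eval_append) (use gc[OF s] in blast)
    then have "h (a \<otimes>\<^bsub>G\<^esub> b) = h (eval_word G g (W a @ W b))"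
      using W[OF ab(1)] W[OF ab(2)] by simp
    also have "\<dots> = eval_word H f' (W a @ W b)" by (rule h_eval[OF s])
    also have "\<dots> = h a \<otimes>\<^bsub>H\<^esub> h b" unfolding h_def by (rule H.eval_append) (use f'c in blast)
    finally show "h (a \<otimes>\<^bsub>G\<^esub> b) = h a \<otimes>\<^bsub>H\<^esub> h b" .
  qed
  moreover have "\<forall>x\<in>Xs. h (g x) = f x"
  proof
    fix x assume x: "x \<in> Xs"
    have gx: "g x \<in> carrier G" using g x by (rule funcset_mem)
    have "g x = eval_word G g [(x,True)]" using gx by simp
    then have "h (g x) = eval_word H f' [(x,True)]" using h_eval[of "[(x,True)]"] x by simp
    moreover have "f x \<in> carrier H" using f x by (rule funcset_mem)
    ultimately show "h (g x) = f x" using x by (simp add: f'_def)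
  qed
  ultimately show ?thesis by blast
qed

lemma hom_unique_gen:
  assumes "group G" "group H" "h1 \<in> hom G H" "h2 \<in> hom G H" "g \<in> Xs \<rightarrow> carrier G"
    "generate G (g ` Xs) = carrier G" "\<And>x. x \<in> Xs \<Longrightarrow> h1 (g x) = h2 (g x)" "a \<in> carrier G"
  shows "h1 a = h2 a"
proof -
  obtain w where w: "fst ` set w \<subseteq> Xs" "a = eval_word G g w"
    using group.generate_words[OF assms(1), of a g Xs] assms by auto
  have gc: "\<And>x. x \<in> fst ` set w \<Longrightarrow> g x \<in> carrier G" using w assms(5) by auto
  have "eval_word H (h1 \<circ> g) w = eval_word H (h2 \<circ> g) w"
    using w(1) assms(7) by (induction w) auto
  moreover have "h1 a = eval_word H (h1 \<circ> g) w" using hom_eval[OF assms(1,2,3), of w g] gc w(2) by simp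
  moreover have "h2 a = eval_word H (h2 \<circ> g) w" using hom_eval[OF assms(1,2,4), of w g] gc w(2) by simp
  ultimately show ?thesis by simp
qed

context group
begin

definition alt :: "'a \<Rightarrow> 'a \<Rightarrow> nat \<Rightarrow> 'a" where
  "alt x y n = (if even n then (x \<otimes> y) [^] (n div 2) else (x \<otimes> y) [^] (n div 2) \<otimes> x)"

lemma alt_closed[simp]: "x \<in> carrier G \<Longrightarrow> y \<in> carrier G \<Longrightarrow> alt x y n \<in> carrier G"
  by (simp add: alt_def)

lemma pow_swap: "x \<in> carrier G \<Longrightarrow> y \<in> carrier G \<Longrightarrow> (x \<otimes> y) [^] (j::nat) \<otimes> x = x \<otimes> (y \<otimes> x) [^] j"
proof (induction j)
  case 0
  then show ?case by simp
next
  case (Suc j)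
  have "(x \<otimes> y) [^] Suc j \<otimes> x = ((x \<otimes> y) [^] j \<otimes> x) \<otimes> (y \<otimes> x)"
    using Suc.prems by (simp add: m_assoc)
  also have "\<dots> = x \<otimes> (y \<otimes> x) [^] Suc j" using Suc by (simp add: m_assoc)
  finally show ?case .
qed

lemma alt_Suc_left:
  assumes "x \<in> carrier G" "y \<in> carrier G"
  shows "alt x y (Suc k) = x \<otimes> alt y x k"
proof (cases "even k")
  case True
  then show ?thesis using assms by (simp add: alt_def pow_swap)
next
  case False
  then obtain j where k: "k = 2 * j + 1" by (metis oddE)
  have "alt x y (Suc k) = (x \<otimes> y) [^] Suc j" using k by (simp add: alt_def)
  also have "\<dots> = ((x \<otimes> y) [^] j \<otimes> x) \<otimes> y" using assms by (simp add: m_assoc)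
  also have "\<dots> = x \<otimes> ((y \<otimes> x) [^] j \<otimes> y)" using assms by (simp add: pow_swap m_assoc)
  also have "\<dots> = x \<otimes> alt y x k" using k by (simp add: alt_def)
  finally show ?thesis .
qed

lemma alt_Suc_right:
  assumes "x \<in> carrier G" "y \<in> carrier G"
  shows "alt x y (Suc k) = alt x y k \<otimes> (if even k then x else y)"
proof (cases "even k")
  case True
  then show ?thesis using assms by (simp add: alt_def)
next
  case False
  then obtain j where k: "k = 2 * j + 1" by (metis oddE)
  have "alt x y (Suc k) = (x \<otimes> y) [^] Suc j" using k by (simp add: alt_def)
  also have "\<dots> = ((x \<otimes> y) [^] j \<otimes> x) \<otimes> y" using assms by (simp add: m_assoc)
  also have "\<dots> = alt x y k \<otimes> (if even k then x else y)" using k False by (simp add: alt_def)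
  finally show ?thesis .
qed

lemma pq_cancel:
  assumes x: "x \<in> carrier G" and y: "y \<in> carrier G" and c: "c \<in> carrier G"
    and cen: "\<And>z. z \<in> carrier G \<Longrightarrow> c \<otimes> z = z \<otimes> c"
    and xx: "x \<otimes> x = c" and yy: "y \<otimes> y = c"
  shows "(x \<otimes> y) [^] (k::nat) \<otimes> (y \<otimes> x) [^] k = c [^] (2 * k)"
proof (induction k)
  case 0
  then show ?case by simp
next
  case (Suc k)
  let ?p = "x \<otimes> y" and ?q = "y \<otimes> x"
  have pq: "?p \<otimes> ?q = c \<otimes> c"
  proof -
    have "?p \<otimes> ?q = x \<otimes> ((y \<otimes> y) \<otimes> x)" using x y by (simp add: m_assoc)
    also have "\<dots> = x \<otimes> (x \<otimes> c)" using yy cen[OF x] by simp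
    also have "\<dots> = (x \<otimes> x) \<otimes> c" using x c by (simp add: m_assoc)
    finally show ?thesis using xx by simp
  qed
  have pc: "?p \<in> carrier G" "?q \<in> carrier G" "?p [^] k \<in> carrier G" "?q [^] k \<in> carrier G"
    "c \<otimes> c \<in> carrier G" using x y c by auto
  have e1: "?q [^] Suc k = ?q \<otimes> ?q [^] k" by (rule nat_pow_Suc2) (use pc in auto)
  have ccen: "?p [^] k \<otimes> (c \<otimes> c) = (c \<otimes> c) \<otimes> ?p [^] k"
  proof -
    have h: "c \<otimes> ?p [^] k = ?p [^] k \<otimes> c" using cen[OF pc(3)] .
    have "?p [^] k \<otimes> (c \<otimes> c) = (?p [^] k \<otimes> c) \<otimes> c" using pc c by (simp add: m_assoc)
    also have "\<dots> = (c \<otimes> ?p [^] k) \<otimes> c" by (simp only: h)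
    also have "\<dots> = c \<otimes> (?p [^] k \<otimes> c)" using pc c by (simp add: m_assoc)
    also have "\<dots> = c \<otimes> (c \<otimes> ?p [^] k)" by (simp only: h)
    also have "\<dots> = (c \<otimes> c) \<otimes> ?p [^] k" using pc c by (simp add: m_assoc)
    finally show ?thesis .
  qed
  have c2: "c [^] (2 * Suc k) = (c \<otimes> c) \<otimes> c [^] (2 * k)"
  proof -
    have e: "2 * Suc k = 2 + 2 * k" by simp
    have "c [^] (2 * Suc k) = c [^] (2 + 2 * k)" by (simp only: e)
    also have "\<dots> = c [^] (2::nat) \<otimes> c [^] (2 * k)" by (rule nat_pow_mult[OF c, symmetric])
    also have "c [^] (2::nat) = c \<otimes> c" using c by (simp add: numeral_2_eq_2)
    finally show ?thesis .
  qed
  have "?p [^] Suc k \<otimes> ?q [^] Suc k = (?p [^] k \<otimes> ?p) \<otimes> (?q \<otimes> ?q [^] k)"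
    by (subst e1) (simp only: nat_pow_Suc)
  also have "\<dots> = ?p [^] k \<otimes> (?p \<otimes> ?q) \<otimes> ?q [^] k" using pc by (simp add: m_assoc)
  also have "\<dots> = (?p [^] k \<otimes> (c \<otimes> c)) \<otimes> ?q [^] k" by (simp only: pq)
  also have "\<dots> = (c \<otimes> c) \<otimes> (?p [^] k \<otimes> ?q [^] k)" using pc by (simp only: ccen m_assoc)
  also have "\<dots> = c [^] (2 * Suc k)" by (simp only: Suc.IH c2)
  finally show ?case .
qed

lemma braid_iff:
  assumes x: "x \<in> carrier G" and y: "y \<in> carrier G" and c: "c \<in> carrier G"
    and cen: "\<And>z. z \<in> carrier G \<Longrightarrow> c \<otimes> z = z \<otimes> c"
    and xx: "x \<otimes> x = c" and yy: "y \<otimes> y = c"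
  shows "(x \<otimes> y) [^] (n::nat) = c [^] n \<longleftrightarrow> alt x y n = alt y x n"
proof -
  let ?p = "x \<otimes> y" and ?q = "y \<otimes> x"
  have pc: "?p \<in> carrier G" "?q \<in> carrier G" "?p [^] k \<in> carrier G" "?q [^] k \<in> carrier G"
    for k :: nat using x y by auto
  obtain k where n: "n = 2 * k \<or> n = 2 * k + 1" by (metis oddE evenE)
  have P: "?p [^] k \<otimes> ?q [^] k = c [^] (2 * k)" by (rule pq_cancel[OF x y c cen xx yy])
  have Q: "?q [^] k \<otimes> ?p [^] k = c [^] (2 * k)" by (rule pq_cancel[OF y x c cen yy xx])
  show ?thesis
  proof (cases "n = 2 * k")
    case True
    have e: "n = k + k" using True by simp
    have P1: "?p [^] n = ?p [^] k \<otimes> ?p [^] k"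
      by (simp only: e) (rule nat_pow_mult[symmetric], rule pc)
    have C1: "c [^] n = ?p [^] k \<otimes> ?q [^] k" using True P by simp
    have "?p [^] n = c [^] n \<longleftrightarrow> ?p [^] k \<otimes> ?p [^] k = ?p [^] k \<otimes> ?q [^] k"
      by (simp only: P1 C1)
    also have "\<dots> \<longleftrightarrow> ?p [^] k = ?q [^] k"
      by (rule Units_l_cancel) (simp_all add: Units_eq pc)
    finally show ?thesis using True by (simp add: alt_def)
  next
    case False
    with n have n1: "n = 2 * k + 1" by simp
    have P2: "?p [^] n = ((?p [^] k \<otimes> x) \<otimes> y) \<otimes> ?p [^] k"
    proof -
      have e: "n = Suc k + k" using n1 by simp
      have "?p [^] n = ?p [^] (Suc k + k)" by (simp only: e)
      also have "\<dots> = ?p [^] (Suc k) \<otimes> ?p [^] k" by (rule nat_pow_mult[symmetric]) (rule pc)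
      also have "\<dots> = ((?p [^] k \<otimes> x) \<otimes> y) \<otimes> ?p [^] k" using x y by (simp add: m_assoc)
      finally show ?thesis .
    qed
    have C2: "c [^] n = ((?q [^] k \<otimes> y) \<otimes> y) \<otimes> ?p [^] k"
    proof -
      have "((?q [^] k \<otimes> y) \<otimes> y) \<otimes> ?p [^] k = (?q [^] k \<otimes> c) \<otimes> ?p [^] k"
        using x y yy by (simp add: m_assoc)
      also have "\<dots> = (c \<otimes> ?q [^] k) \<otimes> ?p [^] k" by (simp only: cen[OF pc(4)])
      also have "\<dots> = c \<otimes> c [^] (2 * k)" using c pc by (simp add: m_assoc Q)
      also have "\<dots> = c [^] (Suc (2 * k))" by (rule nat_pow_Suc2[symmetric]) (rule c)
      finally show ?thesis using n1 by simp
    qed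
    have "?p [^] n = c [^] n \<longleftrightarrow>
        ((?p [^] k \<otimes> x) \<otimes> y) \<otimes> ?p [^] k = ((?q [^] k \<otimes> y) \<otimes> y) \<otimes> ?p [^] k"
      by (simp only: P2 C2)
    also have "\<dots> \<longleftrightarrow> (?p [^] k \<otimes> x) \<otimes> y = (?q [^] k \<otimes> y) \<otimes> y"
      by (rule right_cancel) (use pc x y in auto)
    also have "\<dots> \<longleftrightarrow> ?p [^] k \<otimes> x = ?q [^] k \<otimes> y"
      by (rule right_cancel) (use pc x y in auto)
    finally show ?thesis using n1 by (simp add: alt_def)
  qed
qed

end

lemma hom_int_pow_one:
  assumes "group H" "i \<in> hom integer_group H"
  shows "i n = i 1 [^]\<^bsub>H\<^esub> (n::int)"
proof -
  have "pow integer_group (1::int) n = n" by simp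
  then have "i n = i (pow integer_group (1::int) n)" by simp
  also have "\<dots> = i 1 [^]\<^bsub>H\<^esub> n"
    by (rule hom_int_pow[OF assms(2) _ group_integer_group assms(1)]) simp
  finally show ?thesis .
qed

lemma eval_cong:
  "(\<And>x. x \<in> fst ` set w \<Longrightarrow> f x = g x) \<Longrightarrow> eval_word G f w = eval_word G g w"
  by (induction w) auto

lemma (in group) central_inv:
  assumes a: "a \<in> carrier G" and z: "z \<in> carrier G" and az: "a \<otimes> z = z \<otimes> a"
  shows "inv a \<otimes> z = z \<otimes> inv a"
proof -
  have "a \<otimes> (z \<otimes> inv a) = (a \<otimes> z) \<otimes> inv a" using a z by (simp add: m_assoc)
  also have "\<dots> = (z \<otimes> a) \<otimes> inv a" by (simp only: az)
  also have "\<dots> = z" using a z by (simp add: m_assoc)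
  finally have "z = a \<otimes> (z \<otimes> inv a)" by simp
  then show ?thesis using a z by (simp add: inv_solve_left')
qed

lemma (in group) central_int_pow:
  assumes "c \<in> carrier G" "z \<in> carrier G" "c \<otimes> z = z \<otimes> c"
  shows "c [^] (n::int) \<otimes> z = z \<otimes> c [^] n"
proof -
  have nat: "c [^] (k::nat) \<otimes> z = z \<otimes> c [^] k" for k
    using group_commutes_pow[of c z k] assms by simp
  show ?thesis
  proof (cases "n \<ge> 0")
    case True
    then obtain k where "n = int k" by (metis nonneg_eq_int)
    then show ?thesis using nat[of k] by (simp add: int_pow_int)
  next
    case False
    define k where "k = nat (- n)"
    have k: "n = - int k" using False by (simp add: k_def)
    have "c [^] n = inv (c [^] k)" using k assms by (simp add: int_pow_neg_int)
    then show ?thesis using central_inv[of "c [^] k" z] nat[of k] assms by simp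
  qed
qed

locale cox_setup =
  fixes W :: "'a monoid" and S :: "'a set" and m :: "'a \<Rightarrow> 'a \<Rightarrow> enat"
    and A :: "'b monoid" and e :: "'a \<Rightarrow> 'b" and \<phi> :: "'b \<Rightarrow> 'a" and s :: 'a
  assumes cox: "coxeter_system W S m" and oc: "one_conj_class W S"
    and adj: "adjoint_group W S A e" and phi: "\<phi> \<in> hom A W"
    and phie: "\<forall>x \<in> coxeter_quandle W S. \<phi> (e x) = x" and sS: "s \<in> S"
begin

abbreviation "Q \<equiv> coxeter_quandle W S"
abbreviation "c \<equiv> e s \<otimes>\<^bsub>A\<^esub> e s"

lemma presW: "presented_by W S id (coxeter_relators S m)"
  using cox by (simp add: coxeter_system_def)

lemma grpW: "group W" using presW by (simp add: presented_by_def)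

lemma SW: "S \<subseteq> carrier W" using cox by (simp add: coxeter_system_def)

lemma genW: "generate W S = carrier W" using presW by (simp add: presented_by_def)

lemma presA: "presented_by A Q e (adjoint_relators W Q)"
  using adj by (simp add: adjoint_group_def)

lemma grpA: "group A" using presA by (simp add: presented_by_def)

lemma eA: "e \<in> Q \<rightarrow> carrier A" using presA by (simp add: presented_by_def)

lemma genA: "generate A (e ` Q) = carrier A" using presA by (simp add: presented_by_def)

sublocale W: group W by (rule grpW)
sublocale A: group A by (rule grpA)
sublocale ph: group_hom A W \<phi>
  using phi by (simp add: group_hom.intro group_hom_axioms.intro grpA grpW)

lemma presW_rel: "r \<in> coxeter_relators S m \<Longrightarrow> eval_word W id r = \<one>\<^bsub>W\<^esub>"
  using presW[unfolded presented_by_def] by blast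

lemma presA_rel: "r \<in> adjoint_relators W Q \<Longrightarrow> eval_word A e r = \<one>\<^bsub>A\<^esub>"
  using presA[unfolded presented_by_def] by blast

lemma S_sq: "t \<in> S \<Longrightarrow> t \<otimes>\<^bsub>W\<^esub> t = \<one>\<^bsub>W\<^esub>"
proof -
  assume t: "t \<in> S"
  have mtt: "m t t = 1" using cox t by (simp add: coxeter_system_def)
  have "concat (replicate (the_enat (m t t)) [(t, True), (t, True)]) \<in> coxeter_relators S m"
  proof -
    have "m t t \<noteq> \<infinity>" using mtt by simp
    then show ?thesis unfolding coxeter_relators_def using t by blast
  qed
  moreover have "concat (replicate (the_enat (m t t)) [(t, True), (t, True)]) = [(t, True), (t, True)]"
    using mtt by (simp add: one_enat_def)
  ultimately have "[(t, True), (t, True)] \<in> coxeter_relators S m" by simp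
  then have "eval_word W id [(t, True), (t, True)] = \<one>\<^bsub>W\<^esub>" by (rule presW_rel)
  then show ?thesis using t SW by auto
qed

lemma QE: "x \<in> Q \<longleftrightarrow> (\<exists>w t. x = inv\<^bsub>W\<^esub> w \<otimes>\<^bsub>W\<^esub> t \<otimes>\<^bsub>W\<^esub> w \<and> w \<in> carrier W \<and> t \<in> S)"
  unfolding coxeter_quandle_def by blast

lemma Q_carrier: "x \<in> Q \<Longrightarrow> x \<in> carrier W"
  using SW QE by auto

lemma Q_sq: "x \<in> Q \<Longrightarrow> x \<otimes>\<^bsub>W\<^esub> x = \<one>\<^bsub>W\<^esub>"
proof -
  assume "x \<in> Q"
  then obtain w t where x: "x = inv\<^bsub>W\<^esub> w \<otimes>\<^bsub>W\<^esub> t \<otimes>\<^bsub>W\<^esub> w" "w \<in> carrier W" "t \<in> S"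
    using QE by auto
  have tc: "t \<in> carrier W" using x SW by auto
  have "x \<otimes>\<^bsub>W\<^esub> x = inv\<^bsub>W\<^esub> w \<otimes>\<^bsub>W\<^esub> (t \<otimes>\<^bsub>W\<^esub> t) \<otimes>\<^bsub>W\<^esub> w"
    using x tc by (simp add: W.m_assoc W.cancel_left1)
  then show ?thesis using S_sq[OF x(3)] x(2) by simp
qed

lemma Q_inv: "x \<in> Q \<Longrightarrow> inv\<^bsub>W\<^esub> x = x"
  using Q_sq Q_carrier W.inv_equality by blast

lemma S_Q: "S \<subseteq> Q"
proof
  fix t assume "t \<in> S"
  then have "t = inv\<^bsub>W\<^esub> \<one>\<^bsub>W\<^esub> \<otimes>\<^bsub>W\<^esub> t \<otimes>\<^bsub>W\<^esub> \<one>\<^bsub>W\<^esub>" using SW by auto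
  then show "t \<in> Q" using QE \<open>t \<in> S\<close> by blast
qed

lemma Q_conj: "x \<in> Q \<Longrightarrow> w \<in> carrier W \<Longrightarrow> inv\<^bsub>W\<^esub> w \<otimes>\<^bsub>W\<^esub> x \<otimes>\<^bsub>W\<^esub> w \<in> Q"
proof -
  assume "x \<in> Q" and w: "w \<in> carrier W"
  then obtain v t where x: "x = inv\<^bsub>W\<^esub> v \<otimes>\<^bsub>W\<^esub> t \<otimes>\<^bsub>W\<^esub> v" "v \<in> carrier W" "t \<in> S"
    using QE by auto
  have tc: "t \<in> carrier W" using x SW by auto
  have "inv\<^bsub>W\<^esub> w \<otimes>\<^bsub>W\<^esub> x \<otimes>\<^bsub>W\<^esub> w = inv\<^bsub>W\<^esub> (v \<otimes>\<^bsub>W\<^esub> w) \<otimes>\<^bsub>W\<^esub> t \<otimes>\<^bsub>W\<^esub> (v \<otimes>\<^bsub>W\<^esub> w)"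
    using x tc w by (simp add: W.m_assoc W.inv_mult_group)
  then show ?thesis using QE x w by blast
qed

lemma qop: "x \<in> Q \<Longrightarrow> y \<in> Q \<Longrightarrow> quandle_op W x y = inv\<^bsub>W\<^esub> y \<otimes>\<^bsub>W\<^esub> x \<otimes>\<^bsub>W\<^esub> y"
  using Q_inv by (simp add: quandle_op_def)

lemma eQ: "x \<in> Q \<Longrightarrow> e x \<in> carrier A" using eA by (rule funcset_mem)

lemma A_rel: "x \<in> Q \<Longrightarrow> y \<in> Q \<Longrightarrow>
   inv\<^bsub>A\<^esub> (e y) \<otimes>\<^bsub>A\<^esub> e x \<otimes>\<^bsub>A\<^esub> e y = e (inv\<^bsub>W\<^esub> y \<otimes>\<^bsub>W\<^esub> x \<otimes>\<^bsub>W\<^esub> y)"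
proof -
  assume x: "x \<in> Q" and y: "y \<in> Q"
  have "[(y, False), (x, True), (y, True), (quandle_op W x y, False)] \<in> adjoint_relators W Q"
    unfolding adjoint_relators_def using x y by blast
  then have "eval_word A e [(y, False), (x, True), (y, True), (quandle_op W x y, False)] = \<one>\<^bsub>A\<^esub>"
    by (rule presA_rel)
  moreover have "quandle_op W x y \<in> Q" using qop[OF x y] Q_conj[OF x Q_carrier[OF y]] by simp
  ultimately have "inv\<^bsub>A\<^esub> (e y) \<otimes>\<^bsub>A\<^esub> e x \<otimes>\<^bsub>A\<^esub> e y \<otimes>\<^bsub>A\<^esub> inv\<^bsub>A\<^esub> (e (quandle_op W x y)) = \<one>\<^bsub>A\<^esub>"
    using eQ x y by (simp add: A.m_assoc)
  then have "inv\<^bsub>A\<^esub> (e y) \<otimes>\<^bsub>A\<^esub> e x \<otimes>\<^bsub>A\<^esub> e y = e (quandle_op W x y)"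
    using eQ x y \<open>quandle_op W x y \<in> Q\<close> by (simp add: A.inv_solve_right')
  then show ?thesis using qop[OF x y] by simp
qed

lemma A_rel2: "x \<in> Q \<Longrightarrow> y \<in> Q \<Longrightarrow>
   e y \<otimes>\<^bsub>A\<^esub> e x \<otimes>\<^bsub>A\<^esub> inv\<^bsub>A\<^esub> (e y) = e (inv\<^bsub>W\<^esub> y \<otimes>\<^bsub>W\<^esub> x \<otimes>\<^bsub>W\<^esub> y)"
proof -
  assume x: "x \<in> Q" and y: "y \<in> Q"
  define z where "z = inv\<^bsub>W\<^esub> y \<otimes>\<^bsub>W\<^esub> x \<otimes>\<^bsub>W\<^esub> y"
  have z: "z \<in> Q" unfolding z_def by (rule Q_conj[OF x Q_carrier[OF y]])
  have yc: "y \<in> carrier W" "x \<in> carrier W" using x y Q_carrier by auto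
  have "inv\<^bsub>W\<^esub> y \<otimes>\<^bsub>W\<^esub> z \<otimes>\<^bsub>W\<^esub> y = (y \<otimes>\<^bsub>W\<^esub> y) \<otimes>\<^bsub>W\<^esub> x \<otimes>\<^bsub>W\<^esub> (y \<otimes>\<^bsub>W\<^esub> y)"
    unfolding z_def using Q_inv[OF y] yc by (simp add: W.m_assoc)
  also have "\<dots> = x" using Q_sq[OF y] yc by simp
  finally have h: "inv\<^bsub>A\<^esub> (e y) \<otimes>\<^bsub>A\<^esub> e z \<otimes>\<^bsub>A\<^esub> e y = e x" using A_rel[OF z y] by simp
  have "e y \<otimes>\<^bsub>A\<^esub> e x \<otimes>\<^bsub>A\<^esub> inv\<^bsub>A\<^esub> (e y) =
     e y \<otimes>\<^bsub>A\<^esub> (inv\<^bsub>A\<^esub> (e y) \<otimes>\<^bsub>A\<^esub> e z \<otimes>\<^bsub>A\<^esub> e y) \<otimes>\<^bsub>A\<^esub> inv\<^bsub>A\<^esub> (e y)"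
    by (simp only: h)
  also have "\<dots> = e z" using eQ y z by (simp add: A.m_assoc A.cancel_left1)
  finally have "e z = e y \<otimes>\<^bsub>A\<^esub> e x \<otimes>\<^bsub>A\<^esub> inv\<^bsub>A\<^esub> (e y)" by simp
  then show ?thesis unfolding z_def by simp
qed

end

context cox_setup
begin

lemma words_A: "a \<in> carrier A \<Longrightarrow> \<exists>w. fst ` set w \<subseteq> Q \<and> a = eval_word A e w"
  using A.generate_words[of a e Q] genA eA by simp

lemma words_W: "w \<in> carrier W \<Longrightarrow> \<exists>u. fst ` set u \<subseteq> S \<and> w = eval_word W id u"
proof -
  assume w: "w \<in> carrier W"
  have "id \<in> S \<rightarrow> carrier W" using SW by auto
  then show ?thesis using W.generate_words[of w id S] genW w by simp
qed

lemma evalA_closed: "fst ` set w \<subseteq> Q \<Longrightarrow> eval_word A e w \<in> carrier A"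
  by (rule A.eval_closed) (use eQ in blast)

lemma phi_eval: "fst ` set w \<subseteq> Q \<Longrightarrow> \<phi> (eval_word A e w) = eval_word W id w"
proof -
  assume w: "fst ` set w \<subseteq> Q"
  have "\<phi> (eval_word A e w) = eval_word W (\<phi> \<circ> e) w"
    by (rule hom_eval[OF grpA grpW phi]) (use w eQ in blast)
  also have "\<dots> = eval_word W id w" by (rule eval_cong) (use w phie in auto)
  finally show ?thesis .
qed

lemma phi_surj: "w \<in> carrier W \<Longrightarrow> \<exists>a \<in> carrier A. \<phi> a = w"
proof -
  assume "w \<in> carrier W"
  then obtain u where u: "fst ` set u \<subseteq> S" "w = eval_word W id u" using words_W by blast
  have uQ: "fst ` set u \<subseteq> Q" using u S_Q by auto
  show ?thesis using evalA_closed[OF uQ] phi_eval[OF uQ] u by auto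
qed

lemma conj_word:
  assumes "fst ` set w \<subseteq> Q" "x \<in> Q"
  shows "inv\<^bsub>A\<^esub> (eval_word A e w) \<otimes>\<^bsub>A\<^esub> e x \<otimes>\<^bsub>A\<^esub> eval_word A e w
     = e (inv\<^bsub>W\<^esub> (\<phi> (eval_word A e w)) \<otimes>\<^bsub>W\<^esub> x \<otimes>\<^bsub>W\<^esub> \<phi> (eval_word A e w))"
  using assms
proof (induction w arbitrary: x)
  case Nil
  then show ?case using eQ Q_carrier by simp
next
  case (Cons l w)
  obtain y b where l: "l = (y, b)" by force
  have y: "y \<in> Q" and wQ: "fst ` set w \<subseteq> Q" using Cons.prems l by auto
  define Y where "Y = (if b then e y else inv\<^bsub>A\<^esub> (e y))"
  define a' where "a' = eval_word A e w"
  have Yc: "Y \<in> carrier A" using eQ[OF y] by (simp add: Y_def)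
  have a'c: "a' \<in> carrier A" unfolding a'_def by (rule evalA_closed[OF wQ])
  have ev: "eval_word A e (l # w) = Y \<otimes>\<^bsub>A\<^esub> a'" using l by (simp add: Y_def a'_def)
  define z where "z = inv\<^bsub>W\<^esub> y \<otimes>\<^bsub>W\<^esub> x \<otimes>\<^bsub>W\<^esub> y"
  have z: "z \<in> Q" unfolding z_def by (rule Q_conj[OF Cons.prems(2) Q_carrier[OF y]])
  have YY: "inv\<^bsub>A\<^esub> Y \<otimes>\<^bsub>A\<^esub> e x \<otimes>\<^bsub>A\<^esub> Y = e z"
    using A_rel[OF Cons.prems(2) y] A_rel2[OF Cons.prems(2) y] eQ[OF y]
    by (simp add: Y_def z_def)
  have phY: "\<phi> Y = y" using phie y eQ[OF y] Q_inv[OF y] by (simp add: Y_def)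
  have xc: "x \<in> carrier W" "y \<in> carrier W" "\<phi> a' \<in> carrier W"
    using Cons.prems(2) y Q_carrier a'c by auto
  have "inv\<^bsub>A\<^esub> (Y \<otimes>\<^bsub>A\<^esub> a') \<otimes>\<^bsub>A\<^esub> e x \<otimes>\<^bsub>A\<^esub> (Y \<otimes>\<^bsub>A\<^esub> a')
      = inv\<^bsub>A\<^esub> a' \<otimes>\<^bsub>A\<^esub> (inv\<^bsub>A\<^esub> Y \<otimes>\<^bsub>A\<^esub> e x \<otimes>\<^bsub>A\<^esub> Y) \<otimes>\<^bsub>A\<^esub> a'"
    using Yc a'c eQ[OF Cons.prems(2)] by (simp add: A.inv_mult_group A.m_assoc)
  also have "\<dots> = inv\<^bsub>A\<^esub> a' \<otimes>\<^bsub>A\<^esub> e z \<otimes>\<^bsub>A\<^esub> a'" by (simp only: YY)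
  also have "\<dots> = e (inv\<^bsub>W\<^esub> (\<phi> a') \<otimes>\<^bsub>W\<^esub> z \<otimes>\<^bsub>W\<^esub> \<phi> a')"
    unfolding a'_def by (rule Cons.IH[OF wQ z])
  also have "\<dots> = e (inv\<^bsub>W\<^esub> (\<phi> (Y \<otimes>\<^bsub>A\<^esub> a')) \<otimes>\<^bsub>W\<^esub> x \<otimes>\<^bsub>W\<^esub> \<phi> (Y \<otimes>\<^bsub>A\<^esub> a'))"
    using Yc a'c xc phY by (simp add: z_def W.inv_mult_group W.m_assoc)
  finally show ?case by (simp only: ev)
qed

lemma conj_e:
  "a \<in> carrier A \<Longrightarrow> x \<in> Q \<Longrightarrow>
    inv\<^bsub>A\<^esub> a \<otimes>\<^bsub>A\<^esub> e x \<otimes>\<^bsub>A\<^esub> a = e (inv\<^bsub>W\<^esub> (\<phi> a) \<otimes>\<^bsub>W\<^esub> x \<otimes>\<^bsub>W\<^esub> \<phi> a)"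
  using words_A conj_word by blast

lemma central_gen:
  assumes z: "z \<in> carrier A" and zg: "\<And>x. x \<in> Q \<Longrightarrow> z \<otimes>\<^bsub>A\<^esub> e x = e x \<otimes>\<^bsub>A\<^esub> z"
    and a: "a \<in> carrier A"
  shows "z \<otimes>\<^bsub>A\<^esub> a = a \<otimes>\<^bsub>A\<^esub> z"
proof -
  obtain w where w: "fst ` set w \<subseteq> Q" "a = eval_word A e w" using words_A[OF a] by blast
  have "z \<otimes>\<^bsub>A\<^esub> eval_word A e w = eval_word A e w \<otimes>\<^bsub>A\<^esub> z" using w(1)
  proof (induction w)
    case Nil
    then show ?case using z by simp
  next
    case (Cons l w)
    obtain y b where l: "l = (y, b)" by force
    have y: "y \<in> Q" and wQ: "fst ` set w \<subseteq> Q" using Cons.prems l by auto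
    define Y where "Y = (if b then e y else inv\<^bsub>A\<^esub> (e y))"
    have Yc: "Y \<in> carrier A" using eQ[OF y] by (simp add: Y_def)
    have zY: "z \<otimes>\<^bsub>A\<^esub> Y = Y \<otimes>\<^bsub>A\<^esub> z"
      using zg[OF y] A.central_inv[OF z eQ[OF y]] eQ[OF y] z
      by (simp add: Y_def A.central_inv[symmetric])
    have ac: "eval_word A e w \<in> carrier A" by (rule evalA_closed[OF wQ])
    have "z \<otimes>\<^bsub>A\<^esub> (Y \<otimes>\<^bsub>A\<^esub> eval_word A e w) = (z \<otimes>\<^bsub>A\<^esub> Y) \<otimes>\<^bsub>A\<^esub> eval_word A e w"
      using z Yc ac by (simp add: A.m_assoc)
    also have "\<dots> = Y \<otimes>\<^bsub>A\<^esub> (z \<otimes>\<^bsub>A\<^esub> eval_word A e w)" using z Yc ac zY by (simp add: A.m_assoc)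
    also have "\<dots> = (Y \<otimes>\<^bsub>A\<^esub> eval_word A e w) \<otimes>\<^bsub>A\<^esub> z" using z Yc ac Cons.IH[OF wQ] by (simp add: A.m_assoc)
    finally show ?case using l by (simp add: Y_def)
  qed
  then show ?thesis using w by simp
qed

lemma sq_central:
  assumes x: "x \<in> Q" and y: "y \<in> Q"
  shows "(e x \<otimes>\<^bsub>A\<^esub> e x) \<otimes>\<^bsub>A\<^esub> e y = e y \<otimes>\<^bsub>A\<^esub> (e x \<otimes>\<^bsub>A\<^esub> e x)"
proof -
  define y1 where "y1 = inv\<^bsub>W\<^esub> x \<otimes>\<^bsub>W\<^esub> y \<otimes>\<^bsub>W\<^esub> x"
  have y1: "y1 \<in> Q" unfolding y1_def by (rule Q_conj[OF y Q_carrier[OF x]])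
  have xc: "x \<in> carrier W" "y \<in> carrier W" using x y Q_carrier by auto
  have yy: "inv\<^bsub>W\<^esub> x \<otimes>\<^bsub>W\<^esub> y1 \<otimes>\<^bsub>W\<^esub> x = y"
  proof -
    have "inv\<^bsub>W\<^esub> x \<otimes>\<^bsub>W\<^esub> y1 \<otimes>\<^bsub>W\<^esub> x = (x \<otimes>\<^bsub>W\<^esub> x) \<otimes>\<^bsub>W\<^esub> y \<otimes>\<^bsub>W\<^esub> (x \<otimes>\<^bsub>W\<^esub> x)"
      unfolding y1_def using Q_inv[OF x] xc by (simp add: W.m_assoc)
    then show ?thesis using Q_sq[OF x] xc by simp
  qed
  have ex: "e x \<in> carrier A" "e y \<in> carrier A" using eQ x y by auto
  have "inv\<^bsub>A\<^esub> (e x \<otimes>\<^bsub>A\<^esub> e x) \<otimes>\<^bsub>A\<^esub> e y \<otimes>\<^bsub>A\<^esub> (e x \<otimes>\<^bsub>A\<^esub> e x)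
     = inv\<^bsub>A\<^esub> (e x) \<otimes>\<^bsub>A\<^esub> (inv\<^bsub>A\<^esub> (e x) \<otimes>\<^bsub>A\<^esub> e y \<otimes>\<^bsub>A\<^esub> e x) \<otimes>\<^bsub>A\<^esub> e x"
    using ex by (simp add: A.inv_mult_group A.m_assoc)
  also have "\<dots> = inv\<^bsub>A\<^esub> (e x) \<otimes>\<^bsub>A\<^esub> e y1 \<otimes>\<^bsub>A\<^esub> e x"
    using A_rel[OF y x] by (simp add: y1_def)
  also have "\<dots> = e y" using A_rel[OF y1 x] yy by simp
  finally have h: "inv\<^bsub>A\<^esub> (e x \<otimes>\<^bsub>A\<^esub> e x) \<otimes>\<^bsub>A\<^esub> (e y \<otimes>\<^bsub>A\<^esub> (e x \<otimes>\<^bsub>A\<^esub> e x)) = e y"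
    using ex by (simp add: A.m_assoc)
  show ?thesis using A.inv_solve_left'[of "e y" "e x \<otimes>\<^bsub>A\<^esub> e x" "e y \<otimes>\<^bsub>A\<^esub> (e x \<otimes>\<^bsub>A\<^esub> e x)"] h ex
    by simp
qed

lemma sQ: "s \<in> Q" using sS S_Q by auto

lemma c_closed: "c \<in> carrier A" using eQ[OF sQ] by simp

lemma sq_gen_central: "x \<in> Q \<Longrightarrow> a \<in> carrier A \<Longrightarrow>
   (e x \<otimes>\<^bsub>A\<^esub> e x) \<otimes>\<^bsub>A\<^esub> a = a \<otimes>\<^bsub>A\<^esub> (e x \<otimes>\<^bsub>A\<^esub> e x)"
  by (rule central_gen) (use eQ sq_central in auto)

lemma c_central: "a \<in> carrier A \<Longrightarrow> c \<otimes>\<^bsub>A\<^esub> a = a \<otimes>\<^bsub>A\<^esub> c"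
  using sq_gen_central[OF sQ] by simp

lemma sq_c: "x \<in> Q \<Longrightarrow> e x \<otimes>\<^bsub>A\<^esub> e x = c"
proof -
  assume x: "x \<in> Q"
  obtain w where w: "w \<in> carrier W" "x = inv\<^bsub>W\<^esub> w \<otimes>\<^bsub>W\<^esub> s \<otimes>\<^bsub>W\<^esub> w"
    using oc sQ x unfolding one_conj_class_def by blast
  obtain a where a: "a \<in> carrier A" "\<phi> a = w" using phi_surj[OF w(1)] by blast
  have exa: "e x = inv\<^bsub>A\<^esub> a \<otimes>\<^bsub>A\<^esub> e s \<otimes>\<^bsub>A\<^esub> a" using conj_e[OF a(1) sQ] a w by simp
  have es: "e s \<in> carrier A" using eQ sQ by auto
  have "e x \<otimes>\<^bsub>A\<^esub> e x = inv\<^bsub>A\<^esub> a \<otimes>\<^bsub>A\<^esub> c \<otimes>\<^bsub>A\<^esub> a"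
    unfolding exa using a(1) es by (simp add: A.m_assoc A.cancel_left1)
  also have "\<dots> = inv\<^bsub>A\<^esub> a \<otimes>\<^bsub>A\<^esub> (a \<otimes>\<^bsub>A\<^esub> c)"
    using c_central[OF a(1)] a(1) c_closed by (simp add: A.m_assoc)
  also have "\<dots> = c" using a(1) c_closed by (simp add: A.cancel_left2)
  finally show ?thesis .
qed

lemma phi_c: "\<phi> c = \<one>\<^bsub>W\<^esub>"
  using phie sQ eQ[OF sQ] S_sq[OF sS] by simp

lemma c_pow_central: "a \<in> carrier A \<Longrightarrow> c [^]\<^bsub>A\<^esub> (n::int) \<otimes>\<^bsub>A\<^esub> a = a \<otimes>\<^bsub>A\<^esub> c [^]\<^bsub>A\<^esub> n"
  by (rule A.central_int_pow[OF c_closed _ c_central])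

end

lemma (in group) eval_rep:
  assumes "g a \<in> carrier G" "g b \<in> carrier G"
  shows "eval_word G g (concat (replicate n [(a, True), (b, True)])) = (g a \<otimes> g b) [^] n"
proof (induction n)
  case 0
  then show ?case by simp
next
  case (Suc n)
  have "eval_word G g (concat (replicate (Suc n) [(a, True), (b, True)]))
      = g a \<otimes> (g b \<otimes> eval_word G g (concat (replicate n [(a, True), (b, True)])))"
    by simp
  also have "\<dots> = (g a \<otimes> g b) \<otimes> (g a \<otimes> g b) [^] n" using Suc assms by (simp add: m_assoc)
  also have "\<dots> = (g a \<otimes> g b) [^] Suc n" by (rule nat_pow_Suc2[symmetric]) (use assms in simp)
  finally show ?case .
qed

lemma (in group_hom) hom_alt:
  "x \<in> carrier G \<Longrightarrow> y \<in> carrier G \<Longrightarrow> h (G.alt x y n) = H.alt (h x) (h y) n"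
  by (simp add: G.alt_def H.alt_def hom_nat_pow)

context cox_setup
begin

lemma e_S_word: "x \<in> Q \<Longrightarrow> \<exists>u. fst ` set u \<subseteq> S \<and> e x = eval_word A e u"
proof -
  assume x: "x \<in> Q"
  then obtain w t where wt: "x = inv\<^bsub>W\<^esub> w \<otimes>\<^bsub>W\<^esub> t \<otimes>\<^bsub>W\<^esub> w" "w \<in> carrier W" "t \<in> S"
    using QE by auto
  obtain u0 where u0: "fst ` set u0 \<subseteq> S" "w = eval_word W id u0" using words_W[OF wt(2)] by blast
  have u0Q: "fst ` set u0 \<subseteq> Q" using u0 S_Q by auto
  define a0 where "a0 = eval_word A e u0"
  have a0: "a0 \<in> carrier A" "\<phi> a0 = w"
    using evalA_closed[OF u0Q] phi_eval[OF u0Q] u0 by (auto simp: a0_def)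
  have tQ: "t \<in> Q" using wt S_Q by auto
  have ex: "e x = inv\<^bsub>A\<^esub> a0 \<otimes>\<^bsub>A\<^esub> e t \<otimes>\<^bsub>A\<^esub> a0" using conj_e[OF a0(1) tQ] a0 wt by simp
  define u where "u = invw u0 @ [(t, True)] @ u0"
  have uS: "fst ` set u \<subseteq> S" unfolding u_def set_append image_Un fst_set_invw using u0 wt by auto
  have gc: "\<And>x. x \<in> fst ` set u \<Longrightarrow> e x \<in> carrier A" using uS S_Q eQ by auto
  have gc0: "\<And>x. x \<in> fst ` set u0 \<Longrightarrow> e x \<in> carrier A" using u0Q eQ by auto
  have "eval_word A e u = eval_word A e (invw u0) \<otimes>\<^bsub>A\<^esub> eval_word A e ([(t, True)] @ u0)"
    unfolding u_def by (rule A.eval_append) (use gc in \<open>auto simp: u_def\<close>)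
  also have "\<dots> = inv\<^bsub>A\<^esub> a0 \<otimes>\<^bsub>A\<^esub> (e t \<otimes>\<^bsub>A\<^esub> a0)"
    using A.eval_invw[of u0 e, OF gc0] eQ[OF tQ] a0 by (simp add: a0_def)
  finally show ?thesis using ex uS a0 eQ[OF tQ] by (intro exI[of _ u]) (simp add: A.m_assoc)
qed

lemma A_S_words: "a \<in> carrier A \<Longrightarrow> \<exists>u. fst ` set u \<subseteq> S \<and> a = eval_word A e u"
proof -
  assume a: "a \<in> carrier A"
  obtain w where w: "fst ` set w \<subseteq> Q" "a = eval_word A e w" using words_A[OF a] by blast
  have "\<exists>u. fst ` set u \<subseteq> S \<and> eval_word A e w = eval_word A e u" using w(1)
  proof (induction w)
    case Nil
    then show ?case by (intro exI[of _ "[]"]) simp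
  next
    case (Cons l w)
    obtain y b where l: "l = (y, b)" by force
    have y: "y \<in> Q" and wQ: "fst ` set w \<subseteq> Q" using Cons.prems l by auto
    obtain u1 where u1: "fst ` set u1 \<subseteq> S" "eval_word A e w = eval_word A e u1"
      using Cons.IH[OF wQ] by blast
    obtain uy where uy: "fst ` set uy \<subseteq> S" "e y = eval_word A e uy" using e_S_word[OF y] by blast
    define uy' where "uy' = (if b then uy else invw uy)"
    have gcy: "\<And>x. x \<in> fst ` set uy \<Longrightarrow> e x \<in> carrier A" using uy S_Q eQ by auto
    have uy'S: "fst ` set uy' \<subseteq> S" using uy by (simp add: uy'_def)
    have Y: "eval_word A e uy' = (if b then e y else inv\<^bsub>A\<^esub> (e y))"
      using uy A.eval_invw[of uy e, OF gcy] by (simp add: uy'_def)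
    have sQ': "fst ` set (uy' @ u1) \<subseteq> Q" using uy'S u1 S_Q by auto
    have gc: "\<And>x. x \<in> fst ` set (uy' @ u1) \<Longrightarrow> e x \<in> carrier A" using sQ' eQ by blast
    have "eval_word A e (uy' @ u1) = eval_word A e uy' \<otimes>\<^bsub>A\<^esub> eval_word A e u1"
      by (rule A.eval_append[OF gc])
    then have "eval_word A e (l # w) = eval_word A e (uy' @ u1)" using Y u1 l by simp
    moreover have "fst ` set (uy' @ u1) \<subseteq> S" using uy'S u1 by auto
    ultimately show ?case by blast
  qed
  then show ?thesis using w by auto
qed

definition e' where "e' x = (if x \<in> S then e x else \<one>\<^bsub>A\<^esub>)"

lemma e'c: "e' x \<in> carrier A" using eQ S_Q by (auto simp: e'_def)

lemma eval_e': "fst ` set u \<subseteq> S \<Longrightarrow> eval_word A e' u = eval_word A e u"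
  by (rule eval_cong) (auto simp: e'_def)

lemma braid_A:
  assumes s1: "s1 \<in> S" and t1: "t1 \<in> S"
    and rel: "(s1 \<otimes>\<^bsub>W\<^esub> t1) [^]\<^bsub>W\<^esub> (n::nat) = \<one>\<^bsub>W\<^esub>"
  shows "(e s1 \<otimes>\<^bsub>A\<^esub> e t1) [^]\<^bsub>A\<^esub> n = c [^]\<^bsub>A\<^esub> n"
proof -
  have s1Q: "s1 \<in> Q" and t1Q: "t1 \<in> Q" using s1 t1 S_Q by auto
  have sc: "s1 \<in> carrier W" "t1 \<in> carrier W" using s1 t1 SW by auto
  have Xc: "e s1 \<in> carrier A" "e t1 \<in> carrier A" using eQ s1Q t1Q by auto
  have Wb: "W.alt s1 t1 n = W.alt t1 s1 n"
    using W.braid_iff[OF sc(1) sc(2) W.one_closed _ S_sq[OF s1] S_sq[OF t1]] rel by simp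
  have Ab: "A.alt (e s1) (e t1) n = A.alt (e t1) (e s1) n"
  proof (cases n)
    case 0
    then show ?thesis by (simp add: A.alt_def)
  next
    case (Suc k)
    define U where "U = A.alt (e t1) (e s1) k"
    define z where "z = (if even k then t1 else s1)"
    have Uc: "U \<in> carrier A" using Xc by (simp add: U_def)
    have zQ: "z \<in> Q" using s1Q t1Q by (simp add: z_def)
    have phU: "\<phi> U = W.alt t1 s1 k" unfolding U_def using ph.hom_alt[OF Xc(2) Xc(1)] phie s1Q t1Q by simp
    have uc: "W.alt t1 s1 k \<in> carrier W" using sc by simp
    have "s1 \<otimes>\<^bsub>W\<^esub> W.alt t1 s1 k = W.alt t1 s1 k \<otimes>\<^bsub>W\<^esub> z"
      using Wb Suc W.alt_Suc_left[OF sc(1) sc(2)] W.alt_Suc_right[OF sc(2) sc(1)] by (simp add: z_def)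
    then have wz: "inv\<^bsub>W\<^esub> (W.alt t1 s1 k) \<otimes>\<^bsub>W\<^esub> s1 \<otimes>\<^bsub>W\<^esub> W.alt t1 s1 k = z"
      using uc sc zQ Q_carrier by (simp add: W.m_assoc W.inv_solve_left')
    have "A.alt (e s1) (e t1) n = e s1 \<otimes>\<^bsub>A\<^esub> U" using Suc A.alt_Suc_left[OF Xc] by (simp add: U_def)
    also have "\<dots> = U \<otimes>\<^bsub>A\<^esub> (inv\<^bsub>A\<^esub> U \<otimes>\<^bsub>A\<^esub> e s1 \<otimes>\<^bsub>A\<^esub> U)"
      using Uc Xc by (simp add: A.m_assoc A.cancel_left1)
    also have "\<dots> = U \<otimes>\<^bsub>A\<^esub> e z" using conj_e[OF Uc s1Q] phU wz by simp
    also have "\<dots> = A.alt (e t1) (e s1) n"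
      using Suc A.alt_Suc_right[OF Xc(2) Xc(1)] by (simp add: U_def z_def)
    finally show ?thesis .
  qed
  show ?thesis
    using A.braid_iff[OF Xc c_closed c_central sq_c[OF s1Q] sq_c[OF t1Q]] Ab by simp
qed

lemma rel_c: "r \<in> coxeter_relators S m \<Longrightarrow> \<exists>k::int. eval_word A e' r = c [^]\<^bsub>A\<^esub> k"
proof -
  assume "r \<in> coxeter_relators S m"
  then obtain s1 t1 where st: "s1 \<in> S" "t1 \<in> S"
    and r: "r = concat (replicate (the_enat (m s1 t1)) [(s1, True), (t1, True)])"
    unfolding coxeter_relators_def by blast
  define n where "n = the_enat (m s1 t1)"
  have "eval_word W id r = \<one>\<^bsub>W\<^esub>" using presW_rel \<open>r \<in> coxeter_relators S m\<close> by blast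
  moreover have "eval_word W id r = (s1 \<otimes>\<^bsub>W\<^esub> t1) [^]\<^bsub>W\<^esub> n"
    using W.eval_rep[of id s1 t1 n] st SW r by (auto simp: n_def)
  ultimately have rel: "(s1 \<otimes>\<^bsub>W\<^esub> t1) [^]\<^bsub>W\<^esub> n = \<one>\<^bsub>W\<^esub>" by simp
  have "eval_word A e' r = (e' s1 \<otimes>\<^bsub>A\<^esub> e' t1) [^]\<^bsub>A\<^esub> n"
    using A.eval_rep[of e' s1 t1 n] e'c r by (simp add: n_def)
  also have "\<dots> = c [^]\<^bsub>A\<^esub> n" using braid_A[OF st rel] st by (simp add: e'_def)
  also have "\<dots> = c [^]\<^bsub>A\<^esub> (int n)" by (simp add: int_pow_int)
  finally show ?thesis by blast
qed

end

context cox_setup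
begin

lemma pres_c:
  "pres_eq (coxeter_relators S m) u v \<Longrightarrow> \<exists>k::int. eval_word A e' u = c [^]\<^bsub>A\<^esub> k \<otimes>\<^bsub>A\<^esub> eval_word A e' v"
proof (induction rule: pres_eq.induct)
  case (pres_refl w)
  have "eval_word A e' w \<in> carrier A" by (rule A.eval_closed) (rule e'c)
  then show ?case by (intro exI[of _ 0]) simp
next
  case (pres_sym u v)
  then obtain k :: int where k: "eval_word A e' u = c [^]\<^bsub>A\<^esub> k \<otimes>\<^bsub>A\<^esub> eval_word A e' v" by blast
  have vc: "eval_word A e' v \<in> carrier A" by (rule A.eval_closed) (rule e'c)
  have "c [^]\<^bsub>A\<^esub> (- k) \<otimes>\<^bsub>A\<^esub> eval_word A e' u = (c [^]\<^bsub>A\<^esub> (- k) \<otimes>\<^bsub>A\<^esub> c [^]\<^bsub>A\<^esub> k) \<otimes>\<^bsub>A\<^esub> eval_word A e' v"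
    using k vc c_closed by (simp add: A.m_assoc)
  also have "c [^]\<^bsub>A\<^esub> (- k) \<otimes>\<^bsub>A\<^esub> c [^]\<^bsub>A\<^esub> k = c [^]\<^bsub>A\<^esub> (- k + k)"
    by (rule A.int_pow_mult[symmetric]) (rule c_closed)
  also have "(c [^]\<^bsub>A\<^esub> (- k + k)) \<otimes>\<^bsub>A\<^esub> eval_word A e' v = eval_word A e' v" using vc by simp
  finally show ?case by metis
next
  case (pres_trans u v w)
  then obtain k j :: int where k: "eval_word A e' u = c [^]\<^bsub>A\<^esub> k \<otimes>\<^bsub>A\<^esub> eval_word A e' v"
    and j: "eval_word A e' v = c [^]\<^bsub>A\<^esub> j \<otimes>\<^bsub>A\<^esub> eval_word A e' w" by blast
  have wc: "eval_word A e' w \<in> carrier A" by (rule A.eval_closed) (rule e'c)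
  have "eval_word A e' u = (c [^]\<^bsub>A\<^esub> k \<otimes>\<^bsub>A\<^esub> c [^]\<^bsub>A\<^esub> j) \<otimes>\<^bsub>A\<^esub> eval_word A e' w"
    using k j wc c_closed by (simp add: A.m_assoc)
  also have "\<dots> = c [^]\<^bsub>A\<^esub> (k + j) \<otimes>\<^bsub>A\<^esub> eval_word A e' w" using c_closed by (simp add: A.int_pow_mult)
  finally show ?case by blast
next
  case (pres_cancel u x b v)
  have cl: "\<And>w. eval_word A e' w \<in> carrier A" by (rule A.eval_closed) (rule e'c)
  have "eval_word A e' (u @ [(x, b), (x, \<not> b)] @ v) = eval_word A e' (u @ v)"
    using e'c[of x] cl by (cases b) (simp_all add: A.eval_append e'c A.cancel_left1 A.cancel_left2)
  then show ?case using cl by (intro exI[of _ 0]) simp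
next
  case (pres_rel r u v)
  obtain k :: int where k: "eval_word A e' r = c [^]\<^bsub>A\<^esub> k" using rel_c[OF pres_rel] by blast
  have cl: "\<And>w. eval_word A e' w \<in> carrier A" by (rule A.eval_closed) (rule e'c)
  have "eval_word A e' (u @ r @ v) = eval_word A e' u \<otimes>\<^bsub>A\<^esub> (c [^]\<^bsub>A\<^esub> k \<otimes>\<^bsub>A\<^esub> eval_word A e' v)"
    using k cl by (simp add: A.eval_append e'c)
  also have "\<dots> = (eval_word A e' u \<otimes>\<^bsub>A\<^esub> c [^]\<^bsub>A\<^esub> k) \<otimes>\<^bsub>A\<^esub> eval_word A e' v"
    using cl c_closed by (simp add: A.m_assoc)
  also have "\<dots> = (c [^]\<^bsub>A\<^esub> k \<otimes>\<^bsub>A\<^esub> eval_word A e' u) \<otimes>\<^bsub>A\<^esub> eval_word A e' v"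
    using c_pow_central[OF cl[of u], of k] by simp
  also have "\<dots> = c [^]\<^bsub>A\<^esub> k \<otimes>\<^bsub>A\<^esub> eval_word A e' (u @ v)"
    using cl c_closed by (simp add: A.m_assoc A.eval_append e'c)
  finally show ?case by blast
qed

lemma ker_c: "a \<in> carrier A \<Longrightarrow> \<phi> a = \<one>\<^bsub>W\<^esub> \<Longrightarrow> \<exists>k::int. a = c [^]\<^bsub>A\<^esub> k"
proof -
  assume a: "a \<in> carrier A" and pa: "\<phi> a = \<one>\<^bsub>W\<^esub>"
  obtain u where u: "fst ` set u \<subseteq> S" "a = eval_word A e u" using A_S_words[OF a] by blast
  have uQ: "fst ` set u \<subseteq> Q" using u S_Q by auto
  have "eval_word W id u = \<one>\<^bsub>W\<^esub>" using phi_eval[OF uQ] u pa by simp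
  then have "pres_eq (coxeter_relators S m) u []"
    using presW[unfolded presented_by_def] u(1) by blast
  then obtain k :: int where "eval_word A e' u = c [^]\<^bsub>A\<^esub> k \<otimes>\<^bsub>A\<^esub> eval_word A e' []" using pres_c by blast
  then have "a = c [^]\<^bsub>A\<^esub> k" using eval_e'[OF u(1)] u c_closed by simp
  then show ?thesis by blast
qed

lemma psi_ex: "\<exists>\<psi> \<in> hom A integer_group. \<forall>x\<in>Q. \<psi> (e x) = 1"
proof -
  have "\<exists>h \<in> hom A integer_group. \<forall>x\<in>Q. h (e x) = (\<lambda>_. 1::int) x"
  proof (rule von_dyck[OF presA group_integer_group])
    show "(\<lambda>_. 1::int) \<in> Q \<rightarrow> carrier integer_group" by simp
  next
    fix r assume "r \<in> adjoint_relators W Q"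
    then show "eval_word integer_group (\<lambda>_. 1::int) r = \<one>\<^bsub>integer_group\<^esub>"
      unfolding adjoint_relators_def by auto
  qed
  then show ?thesis by simp
qed

lemma c_pow_inj: "inj_on (\<lambda>n::int. c [^]\<^bsub>A\<^esub> n) (carrier integer_group)"
proof -
  obtain \<psi> where \<psi>: "\<psi> \<in> hom A integer_group" "\<forall>x\<in>Q. \<psi> (e x) = 1" using psi_ex by blast
  have es: "e s \<in> carrier A" using eQ sQ by auto
  have pc: "\<psi> c = 2" using \<psi> sQ es by (simp add: hom_mult)
  have "\<psi> (c [^]\<^bsub>A\<^esub> n) = n * 2" for n :: int
    using hom_int_pow[OF \<psi>(1) c_closed grpA group_integer_group, of n] pc by simp
  then show ?thesis by (intro inj_onI) (metis mult_cancel_right zero_neq_numeral)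
qed

lemma A_central_extension:
  "central_extension integer_group W A (\<lambda>n::int. c [^]\<^bsub>A\<^esub> n) \<phi>"
  unfolding central_extension_def
proof (intro conjI)
  show "(\<lambda>n::int. c [^]\<^bsub>A\<^esub> n) \<in> hom integer_group A"
    using A.hom_integer_group_pow[OF c_closed] by simp
  show "inj_on (\<lambda>n::int. c [^]\<^bsub>A\<^esub> n) (carrier integer_group)" by (rule c_pow_inj)
  show "\<phi> ` carrier A = carrier W" using phi_surj ph.hom_closed by blast
  show "(\<lambda>n::int. c [^]\<^bsub>A\<^esub> n) ` carrier integer_group = kernel A W \<phi>"
  proof
    show "(\<lambda>n::int. c [^]\<^bsub>A\<^esub> n) ` carrier integer_group \<subseteq> kernel A W \<phi>"
      using c_closed phi_c by (auto simp: kernel_def ph.hom_int_pow)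
    show "kernel A W \<phi> \<subseteq> (\<lambda>n::int. c [^]\<^bsub>A\<^esub> n) ` carrier integer_group"
      using ker_c by (auto simp: kernel_def)
  qed
  show "\<forall>z\<in>(\<lambda>n::int. c [^]\<^bsub>A\<^esub> n) ` carrier integer_group. \<forall>x\<in>carrier A. z \<otimes>\<^bsub>A\<^esub> x = x \<otimes>\<^bsub>A\<^esub> z"
    using c_pow_central by auto
qed (use grpA grpW phi in auto)

lemma A_nontrivial:
  "nontrivial_extension integer_group W A (\<lambda>n::int. c [^]\<^bsub>A\<^esub> n) \<phi>"
  unfolding nontrivial_extension_def ext_equiv_def
proof
  assume "\<exists>\<theta>\<in>iso A (integer_group \<times>\<times> W).
     (\<forall>n\<in>carrier integer_group. \<theta> (c [^]\<^bsub>A\<^esub> n) = (n, \<one>\<^bsub>W\<^esub>)) \<and> (\<forall>x\<in>carrier A. snd (\<theta> x) = \<phi> x)"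
  then obtain \<theta> where th: "\<theta> \<in> iso A (integer_group \<times>\<times> W)"
    "\<And>n. \<theta> (c [^]\<^bsub>A\<^esub> n) = (n, \<one>\<^bsub>W\<^esub>)" "\<And>x. x \<in> carrier A \<Longrightarrow> snd (\<theta> x) = \<phi> x" by auto
  have es: "e s \<in> carrier A" using eQ sQ by auto
  obtain k w where kw: "\<theta> (e s) = (k, w)" by force
  have hom: "\<theta> \<in> hom A (integer_group \<times>\<times> W)" using th(1) by (simp add: iso_def)
  have "\<theta> c = (k + k, w \<otimes>\<^bsub>W\<^esub> w)" using hom_mult[OF hom es es] kw by simp
  moreover have "\<theta> c = (1, \<one>\<^bsub>W\<^esub>)" using th(2)[of 1] c_closed by simp
  ultimately have "k + k = 1" by simp
  then show False by presburger
qed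

end

lemma ext_equiv_sym:
  assumes E: "group E" and i: "\<And>n. n \<in> carrier N \<Longrightarrow> i n \<in> carrier E"
    and eq: "ext_equiv N G E i p E' i' p'"
  shows "ext_equiv N G E' i' p' E i p"
proof -
  obtain \<theta> where th: "\<theta> \<in> iso E E'" "\<And>n. n \<in> carrier N \<Longrightarrow> \<theta> (i n) = i' n"
    "\<And>x. x \<in> carrier E \<Longrightarrow> p' (\<theta> x) = p x"
    using eq unfolding ext_equiv_def by blast
  define \<theta>' where "\<theta>' = inv_into (carrier E) \<theta>"
  have iso': "\<theta>' \<in> iso E' E" unfolding \<theta>'_def by (rule group.iso_set_sym[OF E th(1)])
  have bij: "bij_betw \<theta> (carrier E) (carrier E')" using th(1) by (simp add: iso_def)
  have inj: "inj_on \<theta> (carrier E)" using bij by (simp add: bij_betw_def)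
  have img: "\<theta> ` carrier E = carrier E'" using bij by (simp add: bij_betw_def)
  have "\<theta>' (i' n) = i n" if "n \<in> carrier N" for n
    using th(2)[OF that] inv_into_f_f[OF inj i[OF that]] by (simp add: \<theta>'_def)
  moreover have "p (\<theta>' y) = p' y" if y: "y \<in> carrier E'" for y
  proof -
    have yi: "y \<in> \<theta> ` carrier E" using y img by simp
    have c: "\<theta>' y \<in> carrier E" unfolding \<theta>'_def using inv_into_into[OF yi] .
    have "\<theta> (\<theta>' y) = y" unfolding \<theta>'_def by (rule f_inv_into_f[OF yi])
    then show ?thesis using th(3)[OF c] by simp
  qed
  ultimately show ?thesis unfolding ext_equiv_def using iso' by blast
qed

lemma (in group) conj_pow:
  assumes "x \<in> carrier G" "a \<in> carrier G"
  shows "inv x \<otimes> a [^] (n::nat) \<otimes> x = (inv x \<otimes> a \<otimes> x) [^] n"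
proof (induction n)
  case 0
  then show ?case using assms by simp
next
  case (Suc n)
  have "inv x \<otimes> a [^] Suc n \<otimes> x = (inv x \<otimes> a [^] n \<otimes> x) \<otimes> (inv x \<otimes> a \<otimes> x)"
    using assms by (simp add: m_assoc cancel_left1)
  also have "\<dots> = (inv x \<otimes> a \<otimes> x) [^] Suc n" using Suc by simp
  finally show ?case .
qed

locale ext_setup = cox_setup W S m A e \<phi> s
  for W :: "'a monoid" and S m and A :: "'b monoid" and e \<phi> s +
  fixes E :: "'e monoid" and i :: "int \<Rightarrow> 'e" and p :: "'e \<Rightarrow> 'a"
  assumes ce: "central_extension integer_group W E i p"
begin

lemma grpE: "group E" using ce by (simp add: central_extension_def)
lemma ihom: "i \<in> hom integer_group E" using ce by (simp add: central_extension_def)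
lemma iinj: "inj_on i UNIV" using ce by (simp add: central_extension_def)
lemma phom: "p \<in> hom E W" using ce by (simp add: central_extension_def)
lemma psurj: "p ` carrier E = carrier W" using ce by (simp add: central_extension_def)
lemma iker: "range i = kernel E W p" using ce by (simp add: central_extension_def)
lemma icen: "x \<in> carrier E \<Longrightarrow> i n \<otimes>\<^bsub>E\<^esub> x = x \<otimes>\<^bsub>E\<^esub> i n"
  using ce by (simp add: central_extension_def)

sublocale E: group E by (rule grpE)
sublocale pe: group_hom E W p
  using phom by (simp add: group_hom.intro group_hom_axioms.intro grpE grpW)

lemma ic: "i n \<in> carrier E" using ihom by (simp add: hom_in_carrier)

lemma i_add: "i (n + k) = i n \<otimes>\<^bsub>E\<^esub> i k" using hom_mult[OF ihom, of n k] by simp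

lemma i0: "i 0 = \<one>\<^bsub>E\<^esub>" using hom_one[OF ihom group_integer_group grpE] by simp

lemma i_eq1: "i n = \<one>\<^bsub>E\<^esub> \<Longrightarrow> n = 0" using iinj i0 by (metis UNIV_I inj_on_def)

lemma p_i: "p (i n) = \<one>\<^bsub>W\<^esub>"
proof -
  have "i n \<in> kernel E W p" using iker by blast
  then show ?thesis by (simp add: kernel_def)
qed

lemma ker_i: "x \<in> carrier E \<Longrightarrow> p x = \<one>\<^bsub>W\<^esub> \<Longrightarrow> \<exists>n. x = i n"
proof -
  assume "x \<in> carrier E" "p x = \<one>\<^bsub>W\<^esub>"
  then have "x \<in> kernel E W p" by (simp add: kernel_def)
  then show ?thesis using iker by (metis imageE)
qed

lemma lift_s: "\<exists>l r. l \<in> carrier E \<and> p l = s \<and> l \<otimes>\<^bsub>E\<^esub> l = i r \<and> (r = 0 \<or> r = 1)"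
proof -
  have sc: "s \<in> carrier W" using sS SW by auto
  then obtain l0 where l0: "l0 \<in> carrier E" "p l0 = s" using psurj by (metis imageE)
  have "p (l0 \<otimes>\<^bsub>E\<^esub> l0) = \<one>\<^bsub>W\<^esub>" using l0 S_sq[OF sS] by simp
  then obtain k where k: "l0 \<otimes>\<^bsub>E\<^esub> l0 = i k" using ker_i l0 by blast
  define j where "j = k div 2"
  define r where "r = k mod 2"
  have kr: "k + (- j + - j) = r" unfolding j_def r_def by presburger
  have r01: "r = 0 \<or> r = 1" unfolding r_def by presburger
  define l where "l = l0 \<otimes>\<^bsub>E\<^esub> i (- j)"
  have lc: "l \<in> carrier E" using l0 ic by (simp add: l_def)
  have pl: "p l = s" using l0 ic p_i sc by (simp add: l_def)
  have "l \<otimes>\<^bsub>E\<^esub> l = l0 \<otimes>\<^bsub>E\<^esub> (i (- j) \<otimes>\<^bsub>E\<^esub> l0) \<otimes>\<^bsub>E\<^esub> i (- j)"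
    using l0 ic by (simp add: l_def E.m_assoc)
  also have "\<dots> = l0 \<otimes>\<^bsub>E\<^esub> (l0 \<otimes>\<^bsub>E\<^esub> i (- j)) \<otimes>\<^bsub>E\<^esub> i (- j)" using icen[OF l0(1)] by simp
  also have "\<dots> = (l0 \<otimes>\<^bsub>E\<^esub> l0) \<otimes>\<^bsub>E\<^esub> (i (- j) \<otimes>\<^bsub>E\<^esub> i (- j))" using l0 ic by (simp add: E.m_assoc)
  also have "\<dots> = i (k + (- j + - j))" using k by (simp only: i_add)
  finally have "l \<otimes>\<^bsub>E\<^esub> l = i r" using kr by simp
  then show ?thesis using lc pl r01 by blast
qed

lemma good_uniq:
  assumes g: "g \<in> carrier E" and g': "g' \<in> carrier E" and pp: "p g = p g'"
    and gg: "g \<otimes>\<^bsub>E\<^esub> g = i r" and gg': "g' \<otimes>\<^bsub>E\<^esub> g' = i r"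
  shows "g = g'"
proof -
  define d where "d = g' \<otimes>\<^bsub>E\<^esub> inv\<^bsub>E\<^esub> g"
  have dc: "d \<in> carrier E" using g g' by (simp add: d_def)
  have "p d = \<one>\<^bsub>W\<^esub>" using g g' pp by (simp add: d_def)
  then obtain n where n: "d = i n" using ker_i dc by blast
  have g'd: "g' = i n \<otimes>\<^bsub>E\<^esub> g" using g g' n ic[of n] by (simp add: d_def E.inv_solve_right')
  have "g' \<otimes>\<^bsub>E\<^esub> g' = i n \<otimes>\<^bsub>E\<^esub> (g \<otimes>\<^bsub>E\<^esub> i n) \<otimes>\<^bsub>E\<^esub> g" using g ic g'd by (simp add: E.m_assoc)
  also have "\<dots> = i n \<otimes>\<^bsub>E\<^esub> (i n \<otimes>\<^bsub>E\<^esub> g) \<otimes>\<^bsub>E\<^esub> g" using icen[OF g] by simp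
  also have "\<dots> = (i n \<otimes>\<^bsub>E\<^esub> i n) \<otimes>\<^bsub>E\<^esub> (g \<otimes>\<^bsub>E\<^esub> g)" using g ic by (simp add: E.m_assoc)
  also have "\<dots> = i (n + n) \<otimes>\<^bsub>E\<^esub> i r" by (simp only: i_add gg)
  finally have "i (n + n) \<otimes>\<^bsub>E\<^esub> i r = i r" using gg' by simp
  then have "i (n + n) = \<one>\<^bsub>E\<^esub>" using ic by simp
  then have "n + n = 0" by (rule i_eq1)
  then have "n = 0" by simp
  then show ?thesis using g'd g i0 by simp
qed

lemma sq_conj:
  assumes "g \<in> carrier E" "u \<in> carrier E" "g \<otimes>\<^bsub>E\<^esub> g = i r"
  shows "(inv\<^bsub>E\<^esub> u \<otimes>\<^bsub>E\<^esub> g \<otimes>\<^bsub>E\<^esub> u) \<otimes>\<^bsub>E\<^esub> (inv\<^bsub>E\<^esub> u \<otimes>\<^bsub>E\<^esub> g \<otimes>\<^bsub>E\<^esub> u) = i r"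
proof -
  have "(inv\<^bsub>E\<^esub> u \<otimes>\<^bsub>E\<^esub> g \<otimes>\<^bsub>E\<^esub> u) \<otimes>\<^bsub>E\<^esub> (inv\<^bsub>E\<^esub> u \<otimes>\<^bsub>E\<^esub> g \<otimes>\<^bsub>E\<^esub> u)
      = inv\<^bsub>E\<^esub> u \<otimes>\<^bsub>E\<^esub> (g \<otimes>\<^bsub>E\<^esub> g) \<otimes>\<^bsub>E\<^esub> u"
    using assms(1,2) by (simp add: E.m_assoc E.cancel_left1)
  also have "\<dots> = inv\<^bsub>E\<^esub> u \<otimes>\<^bsub>E\<^esub> (u \<otimes>\<^bsub>E\<^esub> i r)" using assms icen[of u r] ic by (simp add: E.m_assoc)
  also have "\<dots> = i r" using assms ic by (simp add: E.cancel_left2)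
  finally show ?thesis .
qed

lemma good_ex:
  assumes l: "l \<in> carrier E" "p l = s" "l \<otimes>\<^bsub>E\<^esub> l = i r" and x: "x \<in> Q"
  shows "\<exists>g. g \<in> carrier E \<and> p g = x \<and> g \<otimes>\<^bsub>E\<^esub> g = i r"
proof -
  obtain w where w: "w \<in> carrier W" "x = inv\<^bsub>W\<^esub> w \<otimes>\<^bsub>W\<^esub> s \<otimes>\<^bsub>W\<^esub> w"
    using oc sQ x unfolding one_conj_class_def by blast
  obtain u where u: "u \<in> carrier E" "p u = w" using psurj w(1) by (metis imageE)
  define g where "g = inv\<^bsub>E\<^esub> u \<otimes>\<^bsub>E\<^esub> l \<otimes>\<^bsub>E\<^esub> u"
  have "g \<in> carrier E" using u l by (simp add: g_def)
  moreover have "p g = x" using u l w by (simp add: g_def)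
  moreover have "g \<otimes>\<^bsub>E\<^esub> g = i r" unfolding g_def by (rule sq_conj[OF l(1) u(1) l(3)])
  ultimately show ?thesis by blast
qed

definition F :: "int \<Rightarrow> 'a \<Rightarrow> 'e" where
  "F r x = (THE g. g \<in> carrier E \<and> p g = x \<and> g \<otimes>\<^bsub>E\<^esub> g = i r)"

lemma F_good:
  assumes l: "l \<in> carrier E" "p l = s" "l \<otimes>\<^bsub>E\<^esub> l = i r" and x: "x \<in> Q"
  shows "F r x \<in> carrier E \<and> p (F r x) = x \<and> F r x \<otimes>\<^bsub>E\<^esub> F r x = i r"
proof -
  have "\<exists>!g. g \<in> carrier E \<and> p g = x \<and> g \<otimes>\<^bsub>E\<^esub> g = i r"
    using good_ex[OF l x] good_uniq by blast
  then show ?thesis unfolding F_def by (rule theI')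
qed

lemma F_eq:
  assumes l: "l \<in> carrier E" "p l = s" "l \<otimes>\<^bsub>E\<^esub> l = i r" and x: "x \<in> Q"
    and g: "g \<in> carrier E" "p g = x" "g \<otimes>\<^bsub>E\<^esub> g = i r"
  shows "F r x = g"
  using F_good[OF l x] g good_uniq by blast

end

context ext_setup
begin

lemma split_case:
  assumes l: "l \<in> carrier E" "p l = s" "l \<otimes>\<^bsub>E\<^esub> l = i 0"
  shows "ext_equiv integer_group W (integer_group \<times>\<times> W) (\<lambda>n. (n, \<one>\<^bsub>W\<^esub>)) snd E i p"
proof -
  let ?G = "F 0"
  have Gg: "?G t \<in> carrier E \<and> p (?G t) = t \<and> ?G t \<otimes>\<^bsub>E\<^esub> ?G t = \<one>\<^bsub>E\<^esub>" if "t \<in> S" for t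
    using F_good[OF l, of t] that S_Q i0 by auto
  have GS: "?G \<in> S \<rightarrow> carrier E" using Gg by auto
  have rels: "eval_word E ?G r = \<one>\<^bsub>E\<^esub>" if r: "r \<in> coxeter_relators S m" for r
  proof -
    obtain s1 t1 where st: "s1 \<in> S" "t1 \<in> S"
      and r': "r = concat (replicate (the_enat (m s1 t1)) [(s1, True), (t1, True)])"
      using r unfolding coxeter_relators_def by blast
    define n where "n = the_enat (m s1 t1)"
    define Xa where "Xa = ?G s1"
    define Ya where "Ya = ?G t1"
    have Xa: "Xa \<in> carrier E" "p Xa = s1" "Xa \<otimes>\<^bsub>E\<^esub> Xa = \<one>\<^bsub>E\<^esub>" using Gg[OF st(1)] by (auto simp: Xa_def)
    have Ya: "Ya \<in> carrier E" "p Ya = t1" "Ya \<otimes>\<^bsub>E\<^esub> Ya = \<one>\<^bsub>E\<^esub>" using Gg[OF st(2)] by (auto simp: Ya_def)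
    have sc: "s1 \<in> carrier W" "t1 \<in> carrier W" using st SW by auto
    have "eval_word W id r = \<one>\<^bsub>W\<^esub>" using presW_rel r by blast
    moreover have "eval_word W id r = (s1 \<otimes>\<^bsub>W\<^esub> t1) [^]\<^bsub>W\<^esub> n"
      using W.eval_rep[of id s1 t1 n] sc r' by (auto simp: n_def)
    ultimately have relW: "(s1 \<otimes>\<^bsub>W\<^esub> t1) [^]\<^bsub>W\<^esub> n = \<one>\<^bsub>W\<^esub>" by simp
    have ev: "eval_word E ?G r = (Xa \<otimes>\<^bsub>E\<^esub> Ya) [^]\<^bsub>E\<^esub> n"
      using E.eval_rep[of ?G s1 t1 n] Xa Ya r' by (simp add: n_def Xa_def Ya_def)
    define a where "a = (Xa \<otimes>\<^bsub>E\<^esub> Ya) [^]\<^bsub>E\<^esub> n"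
    have ac: "a \<in> carrier E" using Xa Ya by (simp add: a_def)
    have "p a = \<one>\<^bsub>W\<^esub>" using Xa Ya relW by (simp add: a_def pe.hom_nat_pow)
    then obtain j where j: "a = i j" using ker_i ac by blast
    have iX: "inv\<^bsub>E\<^esub> Xa = Xa" using Xa by (simp add: E.inv_equality)
    have iY: "inv\<^bsub>E\<^esub> Ya = Ya" using Ya by (simp add: E.inv_equality)
    have "inv\<^bsub>E\<^esub> Xa \<otimes>\<^bsub>E\<^esub> a \<otimes>\<^bsub>E\<^esub> Xa = (inv\<^bsub>E\<^esub> Xa \<otimes>\<^bsub>E\<^esub> (Xa \<otimes>\<^bsub>E\<^esub> Ya) \<otimes>\<^bsub>E\<^esub> Xa) [^]\<^bsub>E\<^esub> n"
      unfolding a_def using Xa Ya by (simp add: E.conj_pow)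
    also have "inv\<^bsub>E\<^esub> Xa \<otimes>\<^bsub>E\<^esub> (Xa \<otimes>\<^bsub>E\<^esub> Ya) \<otimes>\<^bsub>E\<^esub> Xa = inv\<^bsub>E\<^esub> (Xa \<otimes>\<^bsub>E\<^esub> Ya)"
    proof -
      have "inv\<^bsub>E\<^esub> Xa \<otimes>\<^bsub>E\<^esub> (Xa \<otimes>\<^bsub>E\<^esub> Ya) \<otimes>\<^bsub>E\<^esub> Xa = Ya \<otimes>\<^bsub>E\<^esub> Xa"
        using Xa(1) Ya(1) by (simp add: E.m_assoc E.cancel_left2)
      also have "\<dots> = inv\<^bsub>E\<^esub> Ya \<otimes>\<^bsub>E\<^esub> inv\<^bsub>E\<^esub> Xa" using iX iY by simp
      also have "\<dots> = inv\<^bsub>E\<^esub> (Xa \<otimes>\<^bsub>E\<^esub> Ya)" using Xa(1) Ya(1) by (simp add: E.inv_mult_group)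
      finally show ?thesis .
    qed
    also have "(inv\<^bsub>E\<^esub> (Xa \<otimes>\<^bsub>E\<^esub> Ya)) [^]\<^bsub>E\<^esub> n = inv\<^bsub>E\<^esub> a"
      unfolding a_def using Xa Ya by (simp add: E.nat_pow_inv)
    finally have h1: "inv\<^bsub>E\<^esub> Xa \<otimes>\<^bsub>E\<^esub> a \<otimes>\<^bsub>E\<^esub> Xa = inv\<^bsub>E\<^esub> a" .
    have "inv\<^bsub>E\<^esub> Xa \<otimes>\<^bsub>E\<^esub> a \<otimes>\<^bsub>E\<^esub> Xa = inv\<^bsub>E\<^esub> Xa \<otimes>\<^bsub>E\<^esub> (Xa \<otimes>\<^bsub>E\<^esub> a)"
      using icen[OF Xa(1), of j] j Xa ac by (simp add: E.m_assoc)
    also have "\<dots> = a" using Xa ac by (simp add: E.cancel_left2)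
    finally have "a = inv\<^bsub>E\<^esub> a" using h1 by simp
    then have "a \<otimes>\<^bsub>E\<^esub> a = \<one>\<^bsub>E\<^esub>" using ac by (metis E.r_inv)
    then have "i (j + j) = \<one>\<^bsub>E\<^esub>" using j by (simp only: i_add)
    then have "j + j = 0" by (rule i_eq1)
    then have "a = \<one>\<^bsub>E\<^esub>" using j i0 by simp
    then show ?thesis using ev by (simp add: a_def)
  qed
  obtain \<sigma> where \<sigma>: "\<sigma> \<in> hom W E" "\<And>t. t \<in> S \<Longrightarrow> \<sigma> (id t) = ?G t"
    using von_dyck[OF presW grpE GS rels] by blast
  interpret sg: group_hom W E \<sigma> using \<sigma>(1) by (simp add: group_hom.intro group_hom_axioms.intro grpE grpW)
  have idh: "id \<in> hom W W" by (rule homI) auto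
  have ps: "p (\<sigma> w) = w" if w: "w \<in> carrier W" for w
  proof -
    have "(p \<circ> \<sigma>) w = id w"
    proof (rule hom_unique_gen[OF grpW grpW hom_compose[OF \<sigma>(1) phom] idh])
      show "id \<in> S \<rightarrow> carrier W" using SW by auto
      show "generate W (id ` S) = carrier W" using genW by simp
      show "(p \<circ> \<sigma>) (id t) = id (id t)" if "t \<in> S" for t using \<sigma>(2)[OF that] Gg[OF that] by simp
    qed (rule w)
    then show ?thesis by simp
  qed
  define \<kappa> where "\<kappa> x = i (fst x) \<otimes>\<^bsub>E\<^esub> \<sigma> (snd x)" for x
  have \<kappa>hom: "\<kappa> \<in> hom (integer_group \<times>\<times> W) E"
  proof (rule homI)
    fix x assume "x \<in> carrier (integer_group \<times>\<times> W)"
    then show "\<kappa> x \<in> carrier E" using ic by (auto simp: \<kappa>_def)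
  next
    fix x y assume xy: "x \<in> carrier (integer_group \<times>\<times> W)" "y \<in> carrier (integer_group \<times>\<times> W)"
    obtain n w where x: "x = (n, w)" "w \<in> carrier W" using xy by auto
    obtain n' w' where y: "y = (n', w')" "w' \<in> carrier W" using xy by auto
    have sw: "\<sigma> w \<in> carrier E" "\<sigma> w' \<in> carrier E" using x y by auto
    have "\<kappa> (x \<otimes>\<^bsub>integer_group \<times>\<times> W\<^esub> y) = i n \<otimes>\<^bsub>E\<^esub> (i n' \<otimes>\<^bsub>E\<^esub> \<sigma> w) \<otimes>\<^bsub>E\<^esub> \<sigma> w'"
      using x y sw ic by (simp add: \<kappa>_def i_add E.m_assoc)
    also have "\<dots> = i n \<otimes>\<^bsub>E\<^esub> (\<sigma> w \<otimes>\<^bsub>E\<^esub> i n') \<otimes>\<^bsub>E\<^esub> \<sigma> w'" using icen[OF sw(1)] by simp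
    also have "\<dots> = \<kappa> x \<otimes>\<^bsub>E\<^esub> \<kappa> y" using x y sw ic by (simp add: \<kappa>_def E.m_assoc)
    finally show "\<kappa> (x \<otimes>\<^bsub>integer_group \<times>\<times> W\<^esub> y) = \<kappa> x \<otimes>\<^bsub>E\<^esub> \<kappa> y" .
  qed
  have p\<kappa>: "p (\<kappa> x) = snd x" if "x \<in> carrier (integer_group \<times>\<times> W)" for x
    using that ic p_i ps by (auto simp: \<kappa>_def)
  have inj: "inj_on \<kappa> (carrier (integer_group \<times>\<times> W))"
  proof (rule inj_onI)
    fix x y assume x: "x \<in> carrier (integer_group \<times>\<times> W)" and y: "y \<in> carrier (integer_group \<times>\<times> W)"
      and eq: "\<kappa> x = \<kappa> y"
    have "snd x = snd y" using p\<kappa>[OF x] p\<kappa>[OF y] eq by simp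
    moreover have "snd x \<in> carrier W" using x by auto
    ultimately have "i (fst x) = i (fst y)" using eq ic by (simp add: \<kappa>_def)
    then have "fst x = fst y" using iinj by (simp add: inj_on_def)
    then show "x = y" using \<open>snd x = snd y\<close> by (simp add: prod_eq_iff)
  qed
  have surj: "\<kappa> ` carrier (integer_group \<times>\<times> W) = carrier E"
  proof
    show "\<kappa> ` carrier (integer_group \<times>\<times> W) \<subseteq> carrier E" using \<kappa>hom by (auto simp: hom_in_carrier)
  next
    show "carrier E \<subseteq> \<kappa> ` carrier (integer_group \<times>\<times> W)"
    proof
      fix y assume y: "y \<in> carrier E"
      define w where "w = p y"
      have w: "w \<in> carrier W" using y by (simp add: w_def)
      define d where "d = y \<otimes>\<^bsub>E\<^esub> inv\<^bsub>E\<^esub> (\<sigma> w)"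
      have dc: "d \<in> carrier E" using y w by (simp add: d_def)
      have "p d = \<one>\<^bsub>W\<^esub>" using y w ps[OF w] by (simp add: d_def w_def)
      then obtain n where n: "d = i n" using ker_i dc by blast
      have "y = i n \<otimes>\<^bsub>E\<^esub> \<sigma> w" using n y w ic[of n] by (simp add: d_def E.inv_solve_right')
      then have "y = \<kappa> (n, w)" by (simp add: \<kappa>_def)
      moreover have "(n, w) \<in> carrier (integer_group \<times>\<times> W)" using w by simp
      ultimately show "y \<in> \<kappa> ` carrier (integer_group \<times>\<times> W)" by blast
    qed
  qed
  have iso: "\<kappa> \<in> iso (integer_group \<times>\<times> W) E"
    using \<kappa>hom inj surj by (simp add: iso_def bij_betw_def)
  have "\<kappa> (n, \<one>\<^bsub>W\<^esub>) = i n" for n using ic by (simp add: \<kappa>_def)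
  then show ?thesis unfolding ext_equiv_def using p\<kappa> by (intro bexI[OF _ iso]) auto
qed

lemma odd_case:
  assumes l: "l \<in> carrier E" "p l = s" "l \<otimes>\<^bsub>E\<^esub> l = i 1"
  shows "ext_equiv integer_group W A (\<lambda>n::int. c [^]\<^bsub>A\<^esub> n) \<phi> E i p"
proof -
  let ?G = "F 1"
  have Gg: "?G x \<in> carrier E \<and> p (?G x) = x \<and> ?G x \<otimes>\<^bsub>E\<^esub> ?G x = i 1" if "x \<in> Q" for x
    using F_good[OF l that] .
  have GQ: "?G \<in> Q \<rightarrow> carrier E" using Gg by auto
  have rels: "eval_word E ?G r = \<one>\<^bsub>E\<^esub>" if r: "r \<in> adjoint_relators W Q" for r
  proof -
    obtain x y where xy: "x \<in> Q" "y \<in> Q"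
      and r': "r = [(y, False), (x, True), (y, True), (quandle_op W x y, False)]"
      using r unfolding adjoint_relators_def by blast
    define z where "z = quandle_op W x y"
    have zq: "z = inv\<^bsub>W\<^esub> y \<otimes>\<^bsub>W\<^esub> x \<otimes>\<^bsub>W\<^esub> y" using qop[OF xy] by (simp add: z_def)
    have zQ: "z \<in> Q" using zq Q_conj[OF xy(1) Q_carrier[OF xy(2)]] by simp
    define h where "h = inv\<^bsub>E\<^esub> (?G y) \<otimes>\<^bsub>E\<^esub> ?G x \<otimes>\<^bsub>E\<^esub> ?G y"
    have gx: "?G x \<in> carrier E" "p (?G x) = x" "?G x \<otimes>\<^bsub>E\<^esub> ?G x = i 1" using Gg[OF xy(1)] by auto
    have gy: "?G y \<in> carrier E" "p (?G y) = y" using Gg[OF xy(2)] by auto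
    have hc: "h \<in> carrier E" using gx gy by (simp add: h_def)
    have ph: "p h = z" using gx gy zq by (simp add: h_def)
    have hh: "h \<otimes>\<^bsub>E\<^esub> h = i 1" unfolding h_def by (rule sq_conj[OF gx(1) gy(1) gx(3)])
    have Gz: "?G z = h" by (rule F_eq[OF l zQ hc ph hh])
    have "eval_word E ?G r = h \<otimes>\<^bsub>E\<^esub> inv\<^bsub>E\<^esub> (?G z)"
      using gx gy Gg[OF zQ] by (simp add: r' h_def z_def E.m_assoc)
    then show ?thesis using Gz hc by simp
  qed
  obtain \<theta> where \<theta>: "\<theta> \<in> hom A E" "\<And>x. x \<in> Q \<Longrightarrow> \<theta> (e x) = ?G x"
    using von_dyck[OF presA grpE GQ rels] by blast
  interpret tg: group_hom A E \<theta> using \<theta>(1) by (simp add: group_hom.intro group_hom_axioms.intro grpE grpA)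
  have pt: "p (\<theta> a) = \<phi> a" if a: "a \<in> carrier A" for a
  proof -
    have "(p \<circ> \<theta>) a = \<phi> a"
    proof (rule hom_unique_gen[OF grpA grpW hom_compose[OF \<theta>(1) phom] phi eA genA])
      show "(p \<circ> \<theta>) (e x) = \<phi> (e x)" if "x \<in> Q" for x using \<theta>(2)[OF that] Gg[OF that] phie that by simp
    qed (rule a)
    then show ?thesis by simp
  qed
  have tc: "\<theta> c = i 1" using \<theta>(2)[OF sQ] Gg[OF sQ] eQ[OF sQ] by simp
  have tcn: "\<theta> (c [^]\<^bsub>A\<^esub> n) = i n" for n :: int
    using tg.hom_int_pow[OF c_closed, of n] tc hom_int_pow_one[OF grpE ihom, of n] by simp
  have inj: "inj_on \<theta> (carrier A)"
  proof (rule inj_onI)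
    fix a b assume a: "a \<in> carrier A" and b: "b \<in> carrier A" and eq: "\<theta> a = \<theta> b"
    define d where "d = a \<otimes>\<^bsub>A\<^esub> inv\<^bsub>A\<^esub> b"
    have dc: "d \<in> carrier A" using a b by (simp add: d_def)
    have td: "\<theta> d = \<one>\<^bsub>E\<^esub>" using a b eq by (simp add: d_def)
    have "\<phi> d = \<one>\<^bsub>W\<^esub>" using pt[OF dc] td by simp
    then obtain k :: int where k: "d = c [^]\<^bsub>A\<^esub> k" using ker_c dc by blast
    then have "i k = \<one>\<^bsub>E\<^esub>" using td tcn by simp
    then have "k = 0" by (rule i_eq1)
    then have "d = \<one>\<^bsub>A\<^esub>" using k by simp
    then show "a = b" using a b by (simp add: d_def A.inv_solve_right')
  qed
  have surj: "\<theta> ` carrier A = carrier E"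
  proof
    show "\<theta> ` carrier A \<subseteq> carrier E" using tg.hom_closed by auto
  next
    show "carrier E \<subseteq> \<theta> ` carrier A"
    proof
      fix y assume y: "y \<in> carrier E"
      obtain a where a: "a \<in> carrier A" "\<phi> a = p y" using phi_surj[of "p y"] y by auto
      define d where "d = y \<otimes>\<^bsub>E\<^esub> inv\<^bsub>E\<^esub> (\<theta> a)"
      have dc: "d \<in> carrier E" using y a by (simp add: d_def)
      have "p d = \<one>\<^bsub>W\<^esub>" using y a pt[OF a(1)] by (simp add: d_def)
      then obtain n where n: "d = i n" using ker_i dc by blast
      have "y = i n \<otimes>\<^bsub>E\<^esub> \<theta> a" using n y a ic[of n] by (simp add: d_def E.inv_solve_right')
      also have "\<dots> = \<theta> (c [^]\<^bsub>A\<^esub> n \<otimes>\<^bsub>A\<^esub> a)" using tcn a c_closed by simp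
      finally show "y \<in> \<theta> ` carrier A" using a c_closed by blast
    qed
  qed
  have iso: "\<theta> \<in> iso A E" using \<theta>(1) inj surj by (simp add: iso_def bij_betw_def)
  show ?thesis unfolding ext_equiv_def using tcn pt by (intro bexI[OF _ iso]) auto
qed

lemma uniqueness:
  assumes nt: "nontrivial_extension integer_group W E i p"
  shows "ext_equiv integer_group W E i p A (\<lambda>n::int. c [^]\<^bsub>A\<^esub> n) \<phi>"
proof -
  obtain l r where l: "l \<in> carrier E" "p l = s" "l \<otimes>\<^bsub>E\<^esub> l = i r" and r: "r = 0 \<or> r = 1"
    using lift_s by blast
  show ?thesis
  proof (cases "r = 0")
    case True
    have "ext_equiv integer_group W (integer_group \<times>\<times> W) (\<lambda>n. (n, \<one>\<^bsub>W\<^esub>)) snd E i p"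
      using split_case[of l] l True by simp
    then have "ext_equiv integer_group W E i p (integer_group \<times>\<times> W) (\<lambda>n. (n, \<one>\<^bsub>W\<^esub>)) snd"
      by (intro ext_equiv_sym[OF DirProd_group[OF group_integer_group grpW]]) auto
    then show ?thesis using nt unfolding nontrivial_extension_def by blast
  next
    case False
    then have "r = 1" using r by simp
    then have "ext_equiv integer_group W A (\<lambda>n::int. c [^]\<^bsub>A\<^esub> n) \<phi> E i p"
      using odd_case[of l] l by simp
    then show ?thesis by (intro ext_equiv_sym[OF grpA]) (use c_closed in auto)
  qed
qed

end

theorem corollary4p6:
  fixes W :: "'a monoid" and S :: "'a set" and m :: "'a \<Rightarrow> 'a \<Rightarrow> enat"
    and A :: "'b monoid" and e :: "'a \<Rightarrow> 'b" and \<phi> :: "'b \<Rightarrow> 'a"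
  assumes "coxeter_system W S m"
    and "finite S"
    and "one_conj_class W S"
    and "adjoint_group W S A e"
    and "\<phi> \<in> hom A W"
    and "\<forall>x \<in> coxeter_quandle W S. \<phi> (e x) = x"
    and "s \<in> S"
  shows "central_extension integer_group W A (\<lambda>n::int. (e s \<otimes>\<^bsub>A\<^esub> e s) [^]\<^bsub>A\<^esub> n) \<phi>
       \<and> nontrivial_extension integer_group W A (\<lambda>n::int. (e s \<otimes>\<^bsub>A\<^esub> e s) [^]\<^bsub>A\<^esub> n) \<phi>
       \<and> (\<forall>(E :: 'e monoid) i p.
            central_extension integer_group W E i p \<and> nontrivial_extension integer_group W E i p
            \<longrightarrow> ext_equiv integer_group W E i p A (\<lambda>n::int. (e s \<otimes>\<^bsub>A\<^esub> e s) [^]\<^bsub>A\<^esub> n) \<phi>)"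
  proof -
  interpret cox_setup W S m A e \<phi> s
    using assms by (simp add: cox_setup_def)
  have "\<forall>(E :: 'e monoid) i p.
            central_extension integer_group W E i p \<and> nontrivial_extension integer_group W E i p
            \<longrightarrow> ext_equiv integer_group W E i p A (\<lambda>n::int. (e s \<otimes>\<^bsub>A\<^esub> e s) [^]\<^bsub>A\<^esub> n) \<phi>"
  proof (intro allI impI)
    fix E :: "'e monoid" and i p
    assume h: "central_extension integer_group W E i p \<and> nontrivial_extension integer_group W E i p"
    interpret ext_setup W S m A e \<phi> s E i p
      by (intro ext_setup.intro ext_setup_axioms.intro) (use assms h in \<open>auto simp: cox_setup_def\<close>)
    show "ext_equiv integer_group W E i p A (\<lambda>n::int. (e s \<otimes>\<^bsub>A\<^esub> e s) [^]\<^bsub>A\<^esub> n) \<phi>"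
      using uniqueness h by blast
  qed
  then show ?thesis using A_central_extension A_nontrivial by blast
qed

end
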